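(* For any frame $L$, $\mathrm{F}(L)=\mathrm{C}(\mathrm{coS}(L))$ if and only if $\mathrm{coS}(L)$ is an extremally disconnected P-frame.
   Context: $\mathbb{Q}$ is the rationals. A sublocale of $L$ is a subset closed under arbitrary meets and such that $x\to s\in S$ for $x\in L$, $s\in S$; $\mathrm{coS}(L)$ is the frame of sublocales ordered by reverse inclusion, with pseudocomplement $^\ast$. The frame $\mathfrak{L}(\overline{\mathbb{IR}})$ is presented by generators $(r,\textsf{---})$, $(\textsf{---},s)$ ($r,s\in\mathbb{Q}$) with relations (r1) $(r,\textsf{---})\wedge(\textsf{---},s)=0$ for $r\ge s$; (r3) $(r,\textsf{---})=\bigvee_{s>r}(s,\textsf{---})$; (r4) $(\textsf{---},s)=\bigvee_{r<s}(\textsf{---},r)$. For a frame $M$, $\mathrm{C}(M)$ is the set of frame homomorphisms $f\colon\mathfrak{L}(\overline{\mathbb{IR}})\to M$ satisfying (r2) $f(r,\textsf{---})\vee f(\textsf{---},s)=1$ for $r<s$, (r5) $\bigvee_r f(r,\textsf{---})=1$, (r6) $\bigvee_s f(\textsf{---},s)=1$ (i.e. continuous real functions on $M$). $\overline{\mathrm{F}}(L)$ is the set of homomorphisms $f\colon\mathfrak{L}(\overline{\mathbb{IR}})\to\mathrm{coS}(L)$ with $f(r,\textsf{---})^\ast\le f(\textsf{---},s)$ and $f(\textsf{---},s)^\ast\le f(r,\textsf{---})$ for $r<s$, ordered by $f\le g$ iff $f(r,\textsf{---})\le g(r,\textsf{---})$ and $g(\textsf{---},s)\le f(\textsf{---},s)$;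 it is a complete lattice with top $\boldsymbol{+\infty}$ ($(r,\textsf{---})\mapsto1$, $(\textsf{---},s)\mapsto0$) and bottom $\boldsymbol{-\infty}$ ($(r,\textsf{---})\mapsto0$, $(\textsf{---},s)\mapsto1$). $\mathrm{F}(L)$ is the set of $f\in\overline{\mathrm{F}}(L)$ such that for all $g\in\overline{\mathrm{F}}(L)$, $f\vee g=\boldsymbol{+\infty}\Rightarrow g=\boldsymbol{+\infty}$ and $f\wedge g=\boldsymbol{-\infty}\Rightarrow g=\boldsymbol{-\infty}$; note $\mathrm{C}(\mathrm{coS}(L))\subseteq\overline{\mathrm{F}}(L)$. A frame $M$ is extremally disconnected if $a^\ast\vee a^{\ast\ast}=1$ for all $a$; an element $a\in M$ is a cozero if $a=f(\textsf{---},0)\vee f(0,\textsf{---})$ for some $f\in\mathrm{C}(M)$; $M$ is a P-frame if every cozero element is complemented. *)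

theory Defs
  imports Main "HOL.Rat"
begin

class frame = complete_lattice +
  assumes frame_inf_Sup: "inf x (Sup A) = (SUP a\<in>A. inf x a)"

definition fimp :: "'a::complete_lattice \<Rightarrow> 'a \<Rightarrow> 'a" where
  "fimp x s = Sup {y. inf y x \<le> s}"

definition is_sublocale :: "'a::complete_lattice set \<Rightarrow> bool" where
  "is_sublocale S \<longleftrightarrow> (\<forall>A. A \<subseteq> S \<longrightarrow> Inf A \<in> S) \<and> (\<forall>x. \<forall>s\<in>S. fimp x s \<in> S)"

lemma is_sublocale_UNIV: "is_sublocale UNIV"
  by (simp add: is_sublocale_def)

lemma is_sublocale_Inter: "(\<And>S. S \<in> F \<Longrightarrow> is_sublocale S) \<Longrightarrow> is_sublocale (\<Inter>F)"
  unfolding is_sublocale_def by blast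

definition sl_hull :: "'a::complete_lattice set \<Rightarrow> 'a set" where
  "sl_hull X = \<Inter>{S. is_sublocale S \<and> X \<subseteq> S}"

lemma is_sublocale_hull: "is_sublocale (sl_hull X)"
  unfolding sl_hull_def by (rule is_sublocale_Inter) auto

lemma hull_sub: "X \<subseteq> sl_hull X"
  unfolding sl_hull_def by auto

lemma hull_least: "is_sublocale S \<Longrightarrow> X \<subseteq> S \<Longrightarrow> sl_hull X \<subseteq> S"
  unfolding sl_hull_def by auto

text \<open>The type of sublocales of a frame; coS(L) orders them by reverse inclusion.\<close>
typedef (overloaded) 'a coS = "{S::'a::frame set. is_sublocale S}"
  morphisms Rep_coS Abs_coS
  using is_sublocale_UNIV by blast

lemma Rep_coS_sl: "is_sublocale (Rep_coS S)"
  using Rep_coS by auto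

lemma Rep_Abs_hull: "Rep_coS (Abs_coS (sl_hull X)) = sl_hull X"
  by (simp add: Abs_coS_inverse is_sublocale_hull)

lemma Rep_Abs_Inter: "Rep_coS (Abs_coS (\<Inter>(Rep_coS ` A))) = \<Inter>(Rep_coS ` A)"
  by (rule Abs_coS_inverse) (auto intro!: is_sublocale_Inter simp: Rep_coS_sl)

lemma Rep_Abs_Int: "Rep_coS (Abs_coS (Rep_coS S \<inter> Rep_coS T)) = Rep_coS S \<inter> Rep_coS T"
proof -
  have "Rep_coS S \<inter> Rep_coS T = \<Inter>(Rep_coS ` {S, T})" by auto
  then show ?thesis using Rep_Abs_Inter[of "{S,T}"] by simp
qed

instantiation coS :: (frame) complete_lattice
begin

definition less_eq_coS :: "'a coS \<Rightarrow> 'a coS \<Rightarrow> bool" where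
  "S \<le> T \<longleftrightarrow> Rep_coS T \<subseteq> Rep_coS S"
definition less_coS :: "'a coS \<Rightarrow> 'a coS \<Rightarrow> bool" where
  "S < T \<longleftrightarrow> Rep_coS T \<subset> Rep_coS S"
definition sup_coS :: "'a coS \<Rightarrow> 'a coS \<Rightarrow> 'a coS" where
  "sup S T = Abs_coS (Rep_coS S \<inter> Rep_coS T)"
definition inf_coS :: "'a coS \<Rightarrow> 'a coS \<Rightarrow> 'a coS" where
  "inf S T = Abs_coS (sl_hull (Rep_coS S \<union> Rep_coS T))"
definition Sup_coS :: "'a coS set \<Rightarrow> 'a coS" where
  "Sup A = Abs_coS (\<Inter>(Rep_coS ` A))"
definition Inf_coS :: "'a coS set \<Rightarrow> 'a coS" where
  "Inf A = Abs_coS (sl_hull (\<Union>(Rep_coS ` A)))"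
definition bot_coS :: "'a coS" where
  "bot = Abs_coS UNIV"
definition top_coS :: "'a coS" where
  "top = Abs_coS (sl_hull {})"

instance
proof
  fix x y z :: "'a coS" and A :: "'a coS set"
  show "(x < y) = (x \<le> y \<and> \<not> y \<le> x)"
    by (auto simp: less_eq_coS_def less_coS_def)
  show "x \<le> x" by (simp add: less_eq_coS_def)
  show "x \<le> y \<Longrightarrow> y \<le> z \<Longrightarrow> x \<le> z" by (auto simp: less_eq_coS_def)
  show "x \<le> y \<Longrightarrow> y \<le> x \<Longrightarrow> x = y"
    by (simp add: less_eq_coS_def Rep_coS_inject)
  show "inf x y \<le> x" "inf x y \<le> y"
    by (auto simp: less_eq_coS_def inf_coS_def Rep_Abs_hull intro: subsetD[OF hull_sub])
  show "x \<le> y \<Longrightarrow> x \<le> z \<Longrightarrow> x \<le> inf y z"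
    unfolding less_eq_coS_def inf_coS_def Rep_Abs_hull
    by (rule hull_least[OF Rep_coS_sl]) auto
  show "x \<le> sup x y" "y \<le> sup x y"
    by (auto simp: less_eq_coS_def sup_coS_def Rep_Abs_Int)
  show "y \<le> x \<Longrightarrow> z \<le> x \<Longrightarrow> sup y z \<le> x"
    by (auto simp: less_eq_coS_def sup_coS_def Rep_Abs_Int)
  show "x \<in> A \<Longrightarrow> Inf A \<le> x"
    by (auto simp: less_eq_coS_def Inf_coS_def Rep_Abs_hull intro: subsetD[OF hull_sub])
  show "(\<And>x. x \<in> A \<Longrightarrow> z \<le> x) \<Longrightarrow> z \<le> Inf A"
    unfolding less_eq_coS_def Inf_coS_def Rep_Abs_hull
    by (rule hull_least[OF Rep_coS_sl]) auto
  show "x \<in> A \<Longrightarrow> x \<le> Sup A"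
    by (auto simp: less_eq_coS_def Sup_coS_def Rep_Abs_Inter)
  show "(\<And>x. x \<in> A \<Longrightarrow> x \<le> z) \<Longrightarrow> Sup A \<le> z"
    by (auto simp: less_eq_coS_def Sup_coS_def Rep_Abs_Inter)
  show "Inf {} = (top :: 'a coS)" by (simp add: Inf_coS_def top_coS_def)
  show "Sup {} = (bot :: 'a coS)" by (simp add: Sup_coS_def bot_coS_def)
qed

end

text \<open>A pair (u, d): u r is the image of (r,---), d s the image of (---,s).\<close>
type_synonym 'b rfun = "(rat \<Rightarrow> 'b) \<times> (rat \<Rightarrow> 'b)"

text \<open>Frame homomorphisms L(IR-bar) \<rightarrow> M correspond exactly to assignments on the generators
  satisfying the relations (r1), (r3), (r4).\<close>
definition is_rhom :: "('b::complete_lattice) rfun \<Rightarrow> bool" where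
  "is_rhom f \<longleftrightarrow>
     (\<forall>r s. s \<le> r \<longrightarrow> inf (fst f r) (snd f s) = bot) \<and>
     (\<forall>r. fst f r = (SUP s\<in>{s. r < s}. fst f s)) \<and>
     (\<forall>s. snd f s = (SUP r\<in>{r. r < s}. snd f r))"

definition Cont :: "('b::complete_lattice) rfun set" where
  "Cont = {f. is_rhom f \<and>
     (\<forall>r s. r < s \<longrightarrow> sup (fst f r) (snd f s) = top) \<and>
     (SUP r. fst f r) = top \<and> (SUP s. snd f s) = top}"

definition pcompl :: "'b::complete_lattice \<Rightarrow> 'b" where
  "pcompl a = Sup {b. inf b a = bot}"

definition Fbar :: "('b::complete_lattice) rfun set" where
  "Fbar = {f. is_rhom f \<and>
     (\<forall>r s. r < s \<longrightarrow> pcompl (fst f r) \<le> snd f s \<and> pcompl (snd f s) \<le> fst f r)}"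

definition rle :: "('b::complete_lattice) rfun \<Rightarrow> 'b rfun \<Rightarrow> bool" where
  "rle f g \<longleftrightarrow> (\<forall>r. fst f r \<le> fst g r) \<and> (\<forall>s. snd g s \<le> snd f s)"

definition pinf :: "('b::complete_lattice) rfun" where
  "pinf = (\<lambda>_. top, \<lambda>_. bot)"

definition minf :: "('b::complete_lattice) rfun" where
  "minf = (\<lambda>_. bot, \<lambda>_. top)"

definition Fbar_join_is :: "('b::complete_lattice) rfun \<Rightarrow> 'b rfun \<Rightarrow> 'b rfun \<Rightarrow> bool" where
  "Fbar_join_is f g h \<longleftrightarrow> h \<in> Fbar \<and> rle f h \<and> rle g h \<and>
     (\<forall>k\<in>Fbar. rle f k \<and> rle g k \<longrightarrow> rle h k)"

definition Fbar_meet_is :: "('b::complete_lattice) rfun \<Rightarrow> 'b rfun \<Rightarrow> 'b rfun \<Rightarrow> bool" where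
  "Fbar_meet_is f g h \<longleftrightarrow> h \<in> Fbar \<and> rle h f \<and> rle h g \<and>
     (\<forall>k\<in>Fbar. rle k f \<and> rle k g \<longrightarrow> rle k h)"

definition Fr :: "('b::complete_lattice) rfun set" where
  "Fr = {f \<in> Fbar. \<forall>g\<in>Fbar.
     (Fbar_join_is f g pinf \<longrightarrow> g = pinf) \<and> (Fbar_meet_is f g minf \<longrightarrow> g = minf)}"

definition extremally_disconnected :: "('b::complete_lattice) itself \<Rightarrow> bool" where
  "extremally_disconnected _ \<longleftrightarrow> (\<forall>a::'b. sup (pcompl a) (pcompl (pcompl a)) = top)"

definition is_cozero :: "'b::complete_lattice \<Rightarrow> bool" where
  "is_cozero a \<longleftrightarrow> (\<exists>f\<in>Cont. a = sup (snd f 0) (fst f 0))"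

definition P_frame :: "('b::complete_lattice) itself \<Rightarrow> bool" where
  "P_frame _ \<longleftrightarrow> (\<forall>a::'b. is_cozero a \<longrightarrow> (\<exists>b. inf a b = bot \<and> sup a b = top))"

end

theory Submission
  imports Defs
begin

lemma frame_inf_sup_distrib: "inf (x::'b::frame) (sup y z) = sup (inf x y) (inf x z)"
  using frame_inf_Sup[of x "{y,z}"] by simp

subclass (in frame) distrib_lattice
proof
  fix x y z :: 'a
  show "sup x (inf y z) = inf (sup x y) (sup x z)"
    by (rule distrib_imp1) (use frame_inf_Sup[of _ "{_,_}"] in simp)
qed

lemma inf_SUP_frame: "inf (x::'b::frame) (SUP i\<in>I. f i) = (SUP i\<in>I. inf x (f i))"
  by (simp add: frame_inf_Sup image_image)

lemma SUP_inf_frame: "inf (SUP i\<in>I. f i) (x::'b::frame) = (SUP i\<in>I. inf (f i) x)"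
  using inf_SUP_frame[of x f I] by (simp add: inf_commute)

section \<open>Sublocales form a coframe\<close>

lemma fimp_le: "(y::'a::frame) \<le> fimp x s \<longleftrightarrow> inf y x \<le> s"
proof
  assume "inf y x \<le> s" then show "y \<le> fimp x s" unfolding fimp_def by (auto intro: Sup_upper)
next
  assume a: "y \<le> fimp x s"
  have "inf (fimp x s) x = (SUP z\<in>{z. inf z x \<le> s}. inf z x)"
    unfolding fimp_def using SUP_inf_frame[of "\<lambda>z. z" "{z. inf z x \<le> s}" x] by simp
  also have "\<dots> \<le> s" by (auto intro: SUP_least)
  finally show "inf y x \<le> s" using a by (meson inf_mono order_refl order_trans)
qed

lemma fimp_mp: "inf (fimp x s) (x::'a::frame) \<le> s"
  using fimp_le[of "fimp x s" x s] by simp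

lemma fimp_inf: "fimp (x::'a::frame) (inf s t) = inf (fimp x s) (fimp x t)"
proof (rule order.antisym)
  have "inf (fimp x (inf s t)) x \<le> inf s t" by (rule fimp_mp)
  then show "fimp x (inf s t) \<le> inf (fimp x s) (fimp x t)" by (simp add: fimp_le)
  have "inf (inf (fimp x s) (fimp x t)) x \<le> s"
    using fimp_mp[of x s] by (meson inf_le1 inf_mono order_refl order_trans)
  moreover have "inf (inf (fimp x s) (fimp x t)) x \<le> t"
    using fimp_mp[of x t] by (meson inf_le2 inf_mono order_refl order_trans)
  ultimately show "inf (fimp x s) (fimp x t) \<le> fimp x (inf s t)" by (simp add: fimp_le)
qed

lemma fimp_top: "x \<le> (s::'a::frame) \<Longrightarrow> fimp x s = top"
  by (simp add: fimp_le order.antisym le_infI2)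

lemma inf_fimp: "z \<le> (x::'a::frame) \<Longrightarrow> inf x (fimp x z) = z"
proof (rule order.antisym)
  show "inf x (fimp x z) \<le> z" using fimp_le[of "fimp x z" x z] by (simp add: inf_commute)
  assume "z \<le> x" then show "z \<le> inf x (fimp x z)" by (simp add: fimp_le)
qed

lemma sl_Inf: "is_sublocale S \<Longrightarrow> A \<subseteq> S \<Longrightarrow> Inf A \<in> S"
  by (simp add: is_sublocale_def)
lemma sl_fimp: "is_sublocale S \<Longrightarrow> s \<in> S \<Longrightarrow> fimp x s \<in> S"
  by (simp add: is_sublocale_def)
lemma sl_top: "is_sublocale S \<Longrightarrow> top \<in> S"
  using sl_Inf[of S "{}"] by simp
lemma sl_inf: "is_sublocale S \<Longrightarrow> s \<in> S \<Longrightarrow> t \<in> S \<Longrightarrow> inf s t \<in> S"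
  using sl_Inf[of S "{s,t}"] by simp

lemma meets_sublocale:
  assumes S: "is_sublocale (S::'a::frame set)" and T: "is_sublocale T"
  shows "is_sublocale {inf s t |s t. s \<in> S \<and> t \<in> T}" (is "is_sublocale ?M")
  unfolding is_sublocale_def
proof (intro conjI allI impI ballI)
  fix A assume A: "A \<subseteq> ?M"
  then have "\<forall>z\<in>A. \<exists>p. fst p \<in> S \<and> snd p \<in> T \<and> z = inf (fst p) (snd p)" by fastforce
  then obtain p where p: "\<And>z. z \<in> A \<Longrightarrow> fst (p z) \<in> S \<and> snd (p z) \<in> T \<and> z = inf (fst (p z)) (snd (p z))"
    by metis
  have "Inf A = (INF z\<in>A. inf (fst (p z)) (snd (p z)))"
    by (rule arg_cong[where f=Inf]) (use p in force)
  also have "\<dots> = inf (INF z\<in>A. fst (p z)) (INF z\<in>A. snd (p z))"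
    by (simp add: INF_inf_distrib)
  finally have "Inf A = inf (INF z\<in>A. fst (p z)) (INF z\<in>A. snd (p z))" .
  moreover have "(INF z\<in>A. fst (p z)) \<in> S" using p by (intro sl_Inf[OF S]) auto
  moreover have "(INF z\<in>A. snd (p z)) \<in> T" using p by (intro sl_Inf[OF T]) auto
  ultimately show "Inf A \<in> ?M" by blast
next
  fix x z assume "z \<in> ?M"
  then obtain s t where "s \<in> S" "t \<in> T" "z = inf s t" by blast
  then have "fimp x z = inf (fimp x s) (fimp x t)" "fimp x s \<in> S" "fimp x t \<in> T"
    using sl_fimp[OF S] sl_fimp[OF T] by (auto simp: fimp_inf)
  then show "fimp x z \<in> ?M" by blast
qed

lemma hull_union_sub:
  assumes S: "is_sublocale (S::'a::frame set)" and T: "is_sublocale T"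
  shows "sl_hull (S \<union> T) \<subseteq> {inf s t |s t. s \<in> S \<and> t \<in> T}"
proof (rule hull_least[OF meets_sublocale[OF S T]])
  show "S \<union> T \<subseteq> {inf s t |s t. s \<in> S \<and> t \<in> T}"
  proof
    fix z assume "z \<in> S \<union> T"
    then show "z \<in> {inf s t |s t. s \<in> S \<and> t \<in> T}"
    proof
      assume "z \<in> S" then show ?thesis using sl_top[OF T] by (intro CollectI exI[of _ z] exI[of _ top]) simp
    next
      assume "z \<in> T" then show ?thesis using sl_top[OF S] by (intro CollectI exI[of _ top] exI[of _ z]) simp
    qed
  qed
qed

lemma Rep_Sup_coS: "Rep_coS (Sup A) = \<Inter>(Rep_coS ` A)"
  by (simp add: Sup_coS_def Rep_Abs_Inter)
lemma Rep_inf_coS: "Rep_coS (inf S T) = sl_hull (Rep_coS S \<union> Rep_coS T)"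
  by (simp add: inf_coS_def Rep_Abs_hull)

instance coS :: (frame) frame
proof
  fix X :: "'a coS" and A :: "'a coS set"
  show "inf X (Sup A) = (SUP a\<in>A. inf X a)"
  proof (rule order.antisym)
    show "(SUP a\<in>A. inf X a) \<le> inf X (Sup A)"
      by (rule SUP_least, rule inf_mono, simp, erule Sup_upper)
    show "inf X (Sup A) \<le> (SUP a\<in>A. inf X a)"
      unfolding less_eq_coS_def
    proof
      fix z assume "z \<in> Rep_coS (SUP a\<in>A. inf X a)"
      then have z: "\<And>a. a \<in> A \<Longrightarrow> z \<in> sl_hull (Rep_coS X \<union> Rep_coS a)"
        by (auto simp: Rep_Sup_coS Rep_inf_coS)
      have "\<forall>a\<in>A. \<exists>p. fst p \<in> Rep_coS X \<and> snd p \<in> Rep_coS a \<and> z = inf (fst p) (snd p)"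
      proof
        fix a assume "a \<in> A"
        then have "z \<in> {inf s t |s t. s \<in> Rep_coS X \<and> t \<in> Rep_coS a}"
          using subsetD[OF hull_union_sub[OF Rep_coS_sl Rep_coS_sl] z] by simp
        then obtain s t where "s \<in> Rep_coS X" "t \<in> Rep_coS a" "z = inf s t" by blast
        then show "\<exists>p. fst p \<in> Rep_coS X \<and> snd p \<in> Rep_coS a \<and> z = inf (fst p) (snd p)"
          by (intro exI[of _ "(s,t)"]) simp
      qed
      from bchoice[OF this] obtain p where p0: "\<forall>a\<in>A. fst (p a) \<in> Rep_coS X \<and> snd (p a) \<in> Rep_coS a \<and> z = inf (fst (p a)) (snd (p a))"
        by blast
      have p: "\<And>a. a \<in> A \<Longrightarrow> fst (p a) \<in> Rep_coS X \<and> snd (p a) \<in> Rep_coS a \<and> z = inf (fst (p a)) (snd (p a))"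
        using p0 by blast
      define x where "x = (INF a\<in>A. fst (p a))"
      have xX: "x \<in> Rep_coS X" unfolding x_def by (intro sl_Inf[OF Rep_coS_sl]) (use p in blast)
      have zx: "z \<le> x" unfolding x_def
      proof (rule INF_greatest)
        fix a assume "a \<in> A"
        then have "z = inf (fst (p a)) (snd (p a))" using p by blast
        then show "z \<le> fst (p a)" by simp
      qed
      have w: "fimp x z \<in> Rep_coS a" if "a \<in> A" for a
      proof -
        have "x \<le> fst (p a)" unfolding x_def using that by (auto intro: INF_lower)
        moreover have "z = inf (fst (p a)) (snd (p a))" using p[OF that] by blast
        ultimately have "fimp x z = fimp x (snd (p a))"
          by (simp add: fimp_inf fimp_top)
        moreover have "snd (p a) \<in> Rep_coS a" using p[OF that] by blast
        then have "fimp x (snd (p a)) \<in> Rep_coS a" by (rule sl_fimp[OF Rep_coS_sl])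
        ultimately show ?thesis by (simp only:)
      qed
      have H: "is_sublocale (sl_hull (Rep_coS X \<union> \<Inter>(Rep_coS ` A)))" by (rule is_sublocale_hull)
      have "x \<in> Rep_coS X \<union> \<Inter>(Rep_coS ` A)" using xX by (rule UnI1)
      then have "x \<in> sl_hull (Rep_coS X \<union> \<Inter>(Rep_coS ` A))" by (rule subsetD[OF hull_sub])
      moreover have "fimp x z \<in> \<Inter>(Rep_coS ` A)" using w by blast
      then have "fimp x z \<in> Rep_coS X \<union> \<Inter>(Rep_coS ` A)" by (rule UnI2)
      then have "fimp x z \<in> sl_hull (Rep_coS X \<union> \<Inter>(Rep_coS ` A))" by (rule subsetD[OF hull_sub])
      ultimately have "inf x (fimp x z) \<in> sl_hull (Rep_coS X \<union> \<Inter>(Rep_coS ` A))" by (rule sl_inf[OF H])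
      then have "z \<in> sl_hull (Rep_coS X \<union> \<Inter>(Rep_coS ` A))" by (simp only: inf_fimp[OF zx])
      then show "z \<in> Rep_coS (inf X (Sup A))"
        by (simp only: Rep_inf_coS Rep_Sup_coS)
    qed
  qed
qed


section \<open>Pseudocomplements in frames\<close>

lemma pcompl_inf: "inf (pcompl a) (a::'b::frame) = bot"
  unfolding pcompl_def using SUP_inf_frame[of "\<lambda>b. b" "{b. inf b a = bot}" a] by simp

lemma pcompl_inf2: "inf (a::'b::frame) (pcompl a) = bot"
  using pcompl_inf[of a] by (simp add: inf_commute)

lemma le_pcompl_iff: "(b::'b::frame) \<le> pcompl a \<longleftrightarrow> inf b a = bot"
proof
  assume "b \<le> pcompl a"
  then have "inf b a \<le> inf (pcompl a) a" by (rule inf_mono) simp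
  then show "inf b a = bot" using pcompl_inf[of a] by (simp add: bot_unique)
next
  assume "inf b a = bot" then show "b \<le> pcompl a" unfolding pcompl_def by (auto intro: Sup_upper)
qed

lemma pcompl_anti: "(a::'b::frame) \<le> b \<Longrightarrow> pcompl b \<le> pcompl a"
proof -
  assume "a \<le> b"
  then have "inf (pcompl b) a \<le> inf (pcompl b) b" by (rule inf_mono[OF order_refl])
  then show ?thesis using pcompl_inf[of b] by (simp add: le_pcompl_iff bot_unique)
qed

lemma pcompl_pcompl_ge: "(a::'b::frame) \<le> pcompl (pcompl a)"
  by (simp add: le_pcompl_iff pcompl_inf2)

lemma pcompl3: "pcompl (pcompl (pcompl (a::'b::frame))) = pcompl a"
  by (simp add: order.antisym pcompl_anti pcompl_pcompl_ge)

lemma pcompl_top: "pcompl (top::'b::frame) = bot"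
  using pcompl_inf[of "top::'b"] by simp

lemma pcompl_bot: "pcompl (bot::'b::frame) = top"
  by (simp add: le_pcompl_iff top_unique[symmetric])

lemma pcompl_le_of_sup: "sup a b = (top::'b::frame) \<Longrightarrow> pcompl a \<le> b"
proof -
  assume h: "sup a b = top"
  have "pcompl a = inf (pcompl a) (sup a b)" by (simp add: h)
  also have "\<dots> = sup (inf (pcompl a) a) (inf (pcompl a) b)" by (rule inf_sup_distrib1)
  also have "\<dots> = inf (pcompl a) b" by (simp add: pcompl_inf)
  also have "\<dots> \<le> b" by simp
  finally show ?thesis .
qed

lemma pcompl_dense_bot: "pcompl (sup a (pcompl a)) = (bot::'b::frame)"
proof -
  define p where "p = pcompl (sup a (pcompl a))"
  have 0: "inf p (sup a (pcompl a)) = bot" unfolding p_def by (rule pcompl_inf)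
  have "inf p a \<le> inf p (sup a (pcompl a))" by (rule inf_mono) simp_all
  then have "inf p a = bot" using 0 by (simp add: bot_unique)
  then have 1: "p \<le> pcompl a" by (simp add: le_pcompl_iff)
  have "inf p (pcompl a) \<le> inf p (sup a (pcompl a))" by (rule inf_mono) simp_all
  then have "inf p (pcompl a) = bot" using 0 by (simp add: bot_unique)
  then show ?thesis using 1 unfolding p_def[symmetric] by (simp add: inf_absorb1)
qed

definition ED :: "'b::frame itself \<Rightarrow> bool" where
  "ED _ \<longleftrightarrow> (\<forall>a::'b. sup (pcompl a) (pcompl (pcompl a)) = top)"

lemma de_morgan_ED:
  assumes ed: "\<And>a::'b::frame. sup (pcompl a) (pcompl (pcompl a)) = top"
  shows "pcompl (inf x y) \<le> sup (pcompl x) (pcompl (y::'b))"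
proof -
  define z where "z = pcompl (inf x y)"
  have zxy: "inf (inf z y) x = bot" unfolding z_def using pcompl_inf[of "inf x y"]
    by (simp add: ac_simps)
  then have zy: "inf z y \<le> pcompl x" by (simp add: le_pcompl_iff)
  have "inf (inf z (pcompl (pcompl x))) y = bot"
  proof -
    have "inf (inf z (pcompl (pcompl x))) y = inf (inf z y) (pcompl (pcompl x))"
      by (simp add: inf_commute inf_left_commute)
    also have "\<dots> \<le> inf (pcompl x) (pcompl (pcompl x))" using zy by (rule inf_mono) simp
    also have "\<dots> = bot" by (rule pcompl_inf2)
    finally show ?thesis by (simp add: bot_unique)
  qed
  then have A: "inf z (pcompl (pcompl x)) \<le> pcompl y" by (simp add: le_pcompl_iff)
  have "z = inf z (sup (pcompl x) (pcompl (pcompl x)))" by (simp add: ed)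
  also have "\<dots> = sup (inf z (pcompl x)) (inf z (pcompl (pcompl x)))" by (rule inf_sup_distrib1)
  also have "\<dots> \<le> sup (pcompl x) (pcompl y)" using A by (rule sup_mono[OF inf_le2])
  finally show ?thesis unfolding z_def .
qed


lemma rhom_r1: "is_rhom f \<Longrightarrow> s \<le> r \<Longrightarrow> inf (fst f r) (snd f s) = bot"
  unfolding is_rhom_def by blast
lemma rhom_u: "is_rhom f \<Longrightarrow> fst f r = (SUP s\<in>{s. r < s}. fst f s)"
  unfolding is_rhom_def by blast
lemma rhom_d: "is_rhom f \<Longrightarrow> snd f s = (SUP r\<in>{r. r < s}. snd f r)"
  unfolding is_rhom_def by blast

lemma rhom_u_anti: "is_rhom f \<Longrightarrow> r \<le> s \<Longrightarrow> fst f s \<le> fst f r"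
proof (cases "r = s")
  case False
  assume "is_rhom f" "r \<le> s"
  then have "r < s" using False by simp
  then have "fst f s \<le> (SUP t\<in>{t. r < t}. fst f t)" by (intro SUP_upper) simp
  then show ?thesis by (subst rhom_u[OF \<open>is_rhom f\<close>, of r])
qed simp

lemma rhom_d_mono: "is_rhom f \<Longrightarrow> r \<le> s \<Longrightarrow> snd f r \<le> snd f s"
proof (cases "r = s")
  case False
  assume "is_rhom f" "r \<le> s"
  then have "r < s" using False by simp
  then have "snd f r \<le> (SUP t\<in>{t. t < s}. snd f t)" by (intro SUP_upper) simp
  then show ?thesis by (subst rhom_d[OF \<open>is_rhom f\<close>, of s])
qed simp

lemma Fbar_rhom: "f \<in> Fbar \<Longrightarrow> is_rhom f" by (simp add: Fbar_def)
lemma Fbar_c1: "f \<in> Fbar \<Longrightarrow> r < s \<Longrightarrow> pcompl (fst f r) \<le> snd f s" by (simp add: Fbar_def)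
lemma Fbar_c2: "f \<in> Fbar \<Longrightarrow> r < s \<Longrightarrow> pcompl (snd f s) \<le> fst f r" by (simp add: Fbar_def)
lemma FbarI: "is_rhom f \<Longrightarrow> (\<And>r s. r < s \<Longrightarrow> pcompl (fst f r) \<le> snd f s) \<Longrightarrow>
   (\<And>r s. r < s \<Longrightarrow> pcompl (snd f s) \<le> fst f r) \<Longrightarrow> f \<in> Fbar"
  by (simp add: Fbar_def)

lemma Cont_rhom: "f \<in> Cont \<Longrightarrow> is_rhom f" by (simp add: Cont_def)
lemma Cont_r2: "f \<in> Cont \<Longrightarrow> r < s \<Longrightarrow> sup (fst f r) (snd f s) = top" by (simp add: Cont_def)
lemma Cont_r5: "f \<in> Cont \<Longrightarrow> (SUP r. fst f r) = top" by (simp add: Cont_def)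
lemma Cont_r6: "f \<in> Cont \<Longrightarrow> (SUP r. snd f r) = top" by (simp add: Cont_def)
lemma ContI: "is_rhom f \<Longrightarrow> (\<And>r s. r < s \<Longrightarrow> sup (fst f r) (snd f s) = top) \<Longrightarrow>
   (SUP r. fst f r) = top \<Longrightarrow> (SUP s. snd f s) = top \<Longrightarrow> f \<in> Cont"
  by (simp add: Cont_def)

lemma Cont_Fbar: "(f::('b::frame) rfun) \<in> Cont \<Longrightarrow> f \<in> Fbar"
proof (intro FbarI Cont_rhom)
  fix r s :: rat assume "f \<in> Cont" "r < s"
  then have e: "sup (fst f r) (snd f s) = top" by (rule Cont_r2)
  then show "pcompl (fst f r) \<le> snd f s" by (rule pcompl_le_of_sup)
  show "pcompl (snd f s) \<le> fst f r" using e by (intro pcompl_le_of_sup) (simp add: sup_commute)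
qed

definition negf :: "'b rfun \<Rightarrow> 'b rfun" where
  "negf f = (\<lambda>r. snd f (-r), \<lambda>s. fst f (-s))"

lemma negf_fst[simp]: "fst (negf f) r = snd f (-r)" by (simp add: negf_def)
lemma negf_snd[simp]: "snd (negf f) s = fst f (-s)" by (simp add: negf_def)
lemma negf_negf[simp]: "negf (negf f) = f" by (simp add: negf_def)
lemma negf_pinf[simp]: "negf pinf = minf" by (simp add: negf_def pinf_def minf_def)
lemma negf_minf[simp]: "negf minf = pinf" by (simp add: negf_def pinf_def minf_def)

lemma SUP_neg1: "(SUP s\<in>{s::rat. r < s}. g (-s)) = (SUP t\<in>{t. t < -r}. g t)"
proof -
  have "(SUP s\<in>{s::rat. r < s}. g (-s)) = (SUP t\<in>uminus ` {r<..}. g t)"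
    by (simp add: image_image greaterThan_def)
  also have "\<dots> = (SUP t\<in>{t. t < -r}. g t)" by (simp add: lessThan_def)
  finally show ?thesis .
qed

lemma SUP_neg2: "(SUP s\<in>{s::rat. s < r}. g (-s)) = (SUP t\<in>{t. -r < t}. g t)"
proof -
  have "(SUP s\<in>{s::rat. s < r}. g (-s)) = (SUP t\<in>uminus ` {..<r}. g t)"
    by (simp add: image_image lessThan_def)
  also have "\<dots> = (SUP t\<in>{t. -r < t}. g t)" by (simp add: greaterThan_def)
  finally show ?thesis .
qed

lemma SUP_neg_UNIV: "(SUP s::rat. g (-s)) = (SUP t. g t)"
proof -
  have u: "uminus ` (UNIV::rat set) = UNIV" by (rule surjI[of _ uminus]) simp
  have "(\<lambda>s. g (-s)) ` (UNIV::rat set) = g ` (uminus ` UNIV)" by (simp only: image_image)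
  then show ?thesis by (simp only: u)
qed

lemma negf_rhom:
  assumes h: "is_rhom f" shows "is_rhom (negf f)"
  unfolding is_rhom_def negf_fst negf_snd
proof (intro conjI allI impI)
  fix r s :: rat assume "s \<le> r"
  then show "inf (snd f (-r)) (fst f (-s)) = bot" using rhom_r1[OF h, of "-r" "-s"] by (simp add: inf_commute)
next
  fix r :: rat
  show "snd f (-r) = (SUP s\<in>{s. r < s}. snd f (-s))" by (simp only: SUP_neg1 rhom_d[OF h, symmetric])
next
  fix s :: rat
  show "fst f (-s) = (SUP r\<in>{r. r < s}. fst f (-r))" by (simp only: SUP_neg2 rhom_u[OF h, symmetric])
qed

lemma negf_Fbar: "f \<in> Fbar \<Longrightarrow> negf f \<in> Fbar"
proof (rule FbarI)
  assume f: "f \<in> Fbar"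
  then show "is_rhom (negf f)" by (intro negf_rhom Fbar_rhom)
  fix r s :: rat assume rs: "r < s"
  then have "-s < -r" by simp
  then show "pcompl (fst (negf f) r) \<le> snd (negf f) s" "pcompl (snd (negf f) s) \<le> fst (negf f) r"
    using Fbar_c2[OF f] Fbar_c1[OF f] by simp_all
qed

lemma negf_Cont: "f \<in> Cont \<Longrightarrow> negf f \<in> Cont"
proof (rule ContI)
  assume f: "f \<in> Cont"
  then show "is_rhom (negf f)" by (intro negf_rhom Cont_rhom)
  fix r s :: rat assume rs: "r < s"
  then have "-s < -r" by simp
  then show "sup (fst (negf f) r) (snd (negf f) s) = top"
    using Cont_r2[OF f] by (simp add: sup_commute)
next
  assume f: "f \<in> Cont"
  show "(SUP r. fst (negf f) r) = top" using Cont_r6[OF f] by (simp add: SUP_neg_UNIV)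
  show "(SUP r. snd (negf f) r) = top" using Cont_r5[OF f] by (simp add: SUP_neg_UNIV)
qed

lemma negf_rle: "rle f g \<Longrightarrow> rle (negf g) (negf f)"
  by (simp add: rle_def)

lemma negf_rle_iff: "rle (negf g) (negf f) \<longleftrightarrow> rle f g"
proof
  assume a: "rle (negf g) (negf f)"
  show "rle f g" unfolding rle_def
  proof (intro conjI allI)
    fix r show "fst f r \<le> fst g r" using a unfolding rle_def negf_fst negf_snd
      by (elim conjE allE[of _ "-r"]) simp
    show "snd g r \<le> snd f r" using a unfolding rle_def negf_fst negf_snd
      by (elim conjE allE[of _ "-r"]) simp
  qed
qed (rule negf_rle)

lemma negf_meet_join: "Fbar_meet_is f g h \<Longrightarrow> Fbar_join_is (negf f) (negf g) (negf h)"
  unfolding Fbar_meet_is_def Fbar_join_is_def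
proof (intro conjI ballI impI)
  assume H: "h \<in> Fbar \<and> rle h f \<and> rle h g \<and> (\<forall>k\<in>Fbar. rle k f \<and> rle k g \<longrightarrow> rle k h)"
  then show "negf h \<in> Fbar" by (simp add: negf_Fbar)
  show "rle (negf f) (negf h)" "rle (negf g) (negf h)" using H by (simp_all add: negf_rle)
  fix k assume k: "k \<in> Fbar" "rle (negf f) k \<and> rle (negf g) k"
  then have "rle (negf k) f \<and> rle (negf k) g"
    using negf_rle_iff[of f "negf k"] negf_rle_iff[of g "negf k"] by simp
  moreover have "rle (negf k) f \<and> rle (negf k) g \<longrightarrow> rle (negf k) h"
    using H negf_Fbar[OF k(1)] by (elim conjE) (rule bspec)
  ultimately have "rle (negf k) h" by (rule mp[rotated])
  then show "rle (negf h) k" using negf_rle_iff[of h "negf k"] by simp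
qed


section \<open>Pointwise maximum\<close>

definition maxf :: "('b::complete_lattice) rfun \<Rightarrow> 'b rfun \<Rightarrow> 'b rfun" where
  "maxf f g = (\<lambda>r. sup (fst f r) (fst g r), \<lambda>s. SUP t\<in>{t. t < s}. inf (snd f t) (snd g t))"

lemma maxf_fst: "fst (maxf f g) r = sup (fst f r) (fst g r)" by (simp add: maxf_def)
lemma maxf_snd: "snd (maxf f g) s = (SUP t\<in>{t. t < s}. inf (snd f t) (snd g t))" by (simp add: maxf_def)

definition MC :: "('b::complete_lattice) rfun \<Rightarrow> 'b rfun \<Rightarrow> bool" where
  "MC f g \<longleftrightarrow> (\<forall>r t. r < t \<longrightarrow> pcompl (inf (snd f t) (snd g t)) \<le> sup (fst f r) (fst g r))"

lemma mid1: "(r::rat) < s \<Longrightarrow> r < (r + s) / 2" by (simp add: field_simps)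
lemma mid2: "(r::rat) < s \<Longrightarrow> (r + s) / 2 < s" by (simp add: field_simps)

lemma maxf_rhom:
  assumes f: "is_rhom (f::('b::frame) rfun)" and g: "is_rhom g"
  shows "is_rhom (maxf f g)"
  unfolding is_rhom_def maxf_fst maxf_snd
proof (intro conjI allI impI)
  fix r s :: rat assume sr: "s \<le> r"
  have "inf (sup (fst f r) (fst g r)) (SUP t\<in>{t. t < s}. inf (snd f t) (snd g t))
      = (SUP t\<in>{t. t < s}. inf (sup (fst f r) (fst g r)) (inf (snd f t) (snd g t)))"
    by (rule inf_SUP_frame)
  also have "\<dots> \<le> bot"
  proof (rule SUP_least)
    fix t assume "t \<in> {t. t < s}"
    then have tr: "t \<le> r" using sr by simp
    have "inf (sup (fst f r) (fst g r)) (inf (snd f t) (snd g t))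
        = sup (inf (fst f r) (inf (snd f t) (snd g t))) (inf (fst g r) (inf (snd f t) (snd g t)))"
      by (rule inf_sup_distrib2)
    also have "\<dots> \<le> sup (inf (fst f r) (snd f t)) (inf (fst g r) (snd g t))"
      by (intro sup_mono inf_mono) simp_all
    also have "\<dots> = bot" using rhom_r1[OF f tr] rhom_r1[OF g tr] by simp
    finally show "inf (sup (fst f r) (fst g r)) (inf (snd f t) (snd g t)) \<le> bot" .
  qed
  finally show "inf (sup (fst f r) (fst g r)) (SUP t\<in>{t. t < s}. inf (snd f t) (snd g t)) = bot"
    by (simp add: bot_unique)
next
  fix r :: rat
  show "sup (fst f r) (fst g r) = (SUP s\<in>{s. r < s}. sup (fst f s) (fst g s))"
  proof (rule order.antisym)
    have "fst f r \<le> (SUP s\<in>{s. r < s}. sup (fst f s) (fst g s))"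
      by (subst rhom_u[OF f]) (rule SUP_mono', simp)
    moreover have "fst g r \<le> (SUP s\<in>{s. r < s}. sup (fst f s) (fst g s))"
      by (subst rhom_u[OF g]) (rule SUP_mono', simp)
    ultimately show "sup (fst f r) (fst g r) \<le> (SUP s\<in>{s. r < s}. sup (fst f s) (fst g s))"
      by (rule sup_least)
    show "(SUP s\<in>{s. r < s}. sup (fst f s) (fst g s)) \<le> sup (fst f r) (fst g r)"
    proof (rule SUP_least)
      fix s assume "s \<in> {s. r < s}"
      then have "r \<le> s" by simp
      then show "sup (fst f s) (fst g s) \<le> sup (fst f r) (fst g r)"
        by (intro sup_mono rhom_u_anti[OF f] rhom_u_anti[OF g])
    qed
  qed
next
  fix s :: rat
  let ?m = "\<lambda>t. inf (snd f t) (snd g t)"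
  show "(SUP t\<in>{t. t < s}. ?m t) = (SUP r\<in>{r. r < s}. SUP t\<in>{t. t < r}. ?m t)"
  proof (rule order.antisym)
    show "(SUP t\<in>{t. t < s}. ?m t) \<le> (SUP r\<in>{r. r < s}. SUP t\<in>{t. t < r}. ?m t)"
    proof (rule SUP_least)
      fix t assume "t \<in> {t. t < s}"
      then have "t < (t + s) / 2" "(t + s) / 2 < s" using mid1 mid2 by auto
      then have "?m t \<le> (SUP t\<in>{t'. t' < (t + s) / 2}. ?m t)" by (intro SUP_upper) simp
      also have "\<dots> \<le> (SUP r\<in>{r. r < s}. SUP t\<in>{t. t < r}. ?m t)"
        using \<open>(t + s) / 2 < s\<close> by (intro SUP_upper) simp
      finally show "?m t \<le> (SUP r\<in>{r. r < s}. SUP t\<in>{t. t < r}. ?m t)" .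
    qed
    show "(SUP r\<in>{r. r < s}. SUP t\<in>{t. t < r}. ?m t) \<le> (SUP t\<in>{t. t < s}. ?m t)"
      by (rule SUP_least, rule SUP_subset_mono) auto
  qed
qed

lemma maxf_Fbar:
  assumes f: "(f::('b::frame) rfun) \<in> Fbar" and g: "g \<in> Fbar" and mc: "MC f g"
  shows "maxf f g \<in> Fbar"
proof (rule FbarI)
  show "is_rhom (maxf f g)" using f g by (intro maxf_rhom Fbar_rhom)
  fix r s :: rat assume rs: "r < s"
  define t where "t = (r + s) / 2"
  have rt: "r < t" and ts: "t < s" unfolding t_def using mid1[OF rs] mid2[OF rs] by simp_all
  have mt: "inf (snd f t) (snd g t) \<le> snd (maxf f g) s"
    unfolding maxf_snd using ts by (intro SUP_upper) simp
  have "pcompl (fst (maxf f g) r) \<le> inf (pcompl (fst f r)) (pcompl (fst g r))"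
    unfolding maxf_fst by (intro le_infI pcompl_anti) simp_all
  also have "\<dots> \<le> inf (snd f t) (snd g t)"
    by (intro inf_mono Fbar_c1[OF f rt] Fbar_c1[OF g rt])
  also have "\<dots> \<le> snd (maxf f g) s" by (rule mt)
  finally show "pcompl (fst (maxf f g) r) \<le> snd (maxf f g) s" .
  have "pcompl (snd (maxf f g) s) \<le> pcompl (inf (snd f t) (snd g t))" by (rule pcompl_anti[OF mt])
  also have "\<dots> \<le> sup (fst f r) (fst g r)" using mc rt unfolding MC_def by blast
  finally show "pcompl (snd (maxf f g) s) \<le> fst (maxf f g) r" unfolding maxf_fst .
qed

lemma rle_maxf1:
  assumes f: "is_rhom f" shows "rle f (maxf f g)"
  unfolding rle_def maxf_fst maxf_snd
proof (intro conjI allI)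
  fix r show "fst f r \<le> sup (fst f r) (fst g r)" by simp
  fix s
  have "(SUP t\<in>{t. t < s}. inf (snd f t) (snd g t)) \<le> (SUP t\<in>{t. t < s}. snd f t)"
    by (rule SUP_mono) auto
  then show "(SUP t\<in>{t. t < s}. inf (snd f t) (snd g t)) \<le> snd f s"
    by (subst rhom_d[OF f])
qed

lemma rle_maxf2:
  assumes g: "is_rhom g" shows "rle g (maxf f g)"
  unfolding rle_def maxf_fst maxf_snd
proof (intro conjI allI)
  fix r show "fst g r \<le> sup (fst f r) (fst g r)" by simp
  fix s
  have "(SUP t\<in>{t. t < s}. inf (snd f t) (snd g t)) \<le> (SUP t\<in>{t. t < s}. snd g t)"
    by (rule SUP_mono) auto
  then show "(SUP t\<in>{t. t < s}. inf (snd f t) (snd g t)) \<le> snd g s"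
    by (subst rhom_d[OF g])
qed

lemma rle_trans: "rle f g \<Longrightarrow> rle g h \<Longrightarrow> rle f h"
  unfolding rle_def by (meson order_trans)

lemma MC_Cont:
  assumes f: "(f::('b::frame) rfun) \<in> Cont" and g: "g \<in> Fbar" shows "MC f g"
  unfolding MC_def
proof (intro allI impI)
  fix r t :: rat assume rt: "r < t"
  define z where "z = pcompl (inf (snd f t) (snd g t))"
  have "inf (inf z (snd f t)) (snd g t) = bot"
    unfolding z_def using pcompl_inf[of "inf (snd f t) (snd g t)"] by (simp add: ac_simps)
  then have "inf z (snd f t) \<le> pcompl (snd g t)" by (simp add: le_pcompl_iff)
  also have "\<dots> \<le> fst g r" by (rule Fbar_c2[OF g rt])
  finally have A: "inf z (snd f t) \<le> fst g r" .
  have "z = inf z (sup (fst f r) (snd f t))" using Cont_r2[OF f rt] by simp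
  also have "\<dots> = sup (inf z (fst f r)) (inf z (snd f t))" by (rule inf_sup_distrib1)
  also have "\<dots> \<le> sup (fst f r) (fst g r)" using A by (intro sup_mono) simp_all
  finally show "pcompl (inf (snd f t) (snd g t)) \<le> sup (fst f r) (fst g r)" unfolding z_def .
qed

lemma MC_ED:
  assumes ed: "\<And>a::'b::frame. sup (pcompl a) (pcompl (pcompl a)) = top"
    and f: "(f::'b rfun) \<in> Fbar" and g: "g \<in> Fbar" shows "MC f g"
  unfolding MC_def
proof (intro allI impI)
  fix r t :: rat assume rt: "r < t"
  have "pcompl (inf (snd f t) (snd g t)) \<le> sup (pcompl (snd f t)) (pcompl (snd g t))"
    by (rule de_morgan_ED[OF ed])
  also have "\<dots> \<le> sup (fst f r) (fst g r)" by (intro sup_mono Fbar_c2[OF f rt] Fbar_c2[OF g rt])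
  finally show "pcompl (inf (snd f t) (snd g t)) \<le> sup (fst f r) (fst g r)" .
qed

lemma join_cond:
  assumes f: "(f::('b::frame) rfun) \<in> Fbar" and f': "f' \<in> Fbar" and ff': "rle f f'"
    and dense: "pcompl (SUP s. snd f' s) = bot" and mc: "MC f' g"
    and g: "g \<in> Fbar" and J: "Fbar_join_is f g pinf"
  shows "g = pinf"
proof -
  define k where "k = maxf f' g"
  have kF: "k \<in> Fbar" unfolding k_def by (rule maxf_Fbar[OF f' g mc])
  have "rle f k" unfolding k_def by (rule rle_trans[OF ff' rle_maxf1[OF Fbar_rhom[OF f']]])
  moreover have "rle g k" unfolding k_def by (rule rle_maxf2[OF Fbar_rhom[OF g]])
  ultimately have "rle pinf k" using J kF unfolding Fbar_join_is_def by blast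
  then have ks: "\<And>s. snd k s \<le> bot" unfolding rle_def pinf_def by simp
  have m0: "inf (snd f' t) (snd g t) = bot" for t
  proof -
    have "inf (snd f' t) (snd g t) \<le> snd k (t + 1)"
      unfolding k_def maxf_snd by (intro SUP_upper) simp
    then show ?thesis using ks[of "t+1"] by (simp add: bot_unique)
  qed
  have gd: "snd g t = bot" for t
  proof -
    have "inf (snd g t) (SUP s. snd f' s) = (SUP s. inf (snd g t) (snd f' s))" by (rule inf_SUP_frame)
    also have "\<dots> \<le> bot"
    proof (rule SUP_least)
      fix s
      show "inf (snd g t) (snd f' s) \<le> bot"
      proof (cases "s \<le> t")
        case True
        then have "inf (snd g t) (snd f' s) \<le> inf (snd g t) (snd f' t)"
          by (intro inf_mono rhom_d_mono[OF Fbar_rhom[OF f']]) simp_all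
        then show ?thesis using m0[of t] by (simp add: inf_commute)
      next
        case False
        then have "inf (snd g t) (snd f' s) \<le> inf (snd g s) (snd f' s)"
          by (intro inf_mono rhom_d_mono[OF Fbar_rhom[OF g]]) simp_all
        then show ?thesis using m0[of s] by (simp add: inf_commute)
      qed
    qed
    finally have "snd g t \<le> pcompl (SUP s. snd f' s)" by (simp add: le_pcompl_iff bot_unique)
    then show ?thesis using dense by (simp add: bot_unique)
  qed
  have gu: "fst g r = top" for r
  proof -
    have "pcompl (snd g (r + 1)) \<le> fst g r" by (rule Fbar_c2[OF g]) simp
    then show ?thesis by (simp add: gd pcompl_bot top_unique)
  qed
  show "g = pinf" unfolding pinf_def using gu gd by (intro prod_eqI ext) simp_all
qed

lemma FrI:
  fixes f :: "('b::frame) rfun"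
  assumes f: "f \<in> Fbar"
    and j1: "\<And>g. g \<in> Fbar \<Longrightarrow> Fbar_join_is f g pinf \<Longrightarrow> g = pinf"
    and j2: "\<And>g. g \<in> Fbar \<Longrightarrow> Fbar_join_is (negf f) g pinf \<Longrightarrow> g = pinf"
  shows "f \<in> Fr"
  unfolding Fr_def
proof (intro CollectI conjI ballI impI f)
  fix g :: "'b rfun" assume g: "g \<in> Fbar"
  show "Fbar_join_is f g pinf \<Longrightarrow> g = pinf" by (rule j1[OF g])
  assume "Fbar_meet_is f g minf"
  then have "Fbar_join_is (negf f) (negf g) pinf" using negf_meet_join[of f g minf] by simp
  then have "negf g = pinf" by (rule j2[OF negf_Fbar[OF g]])
  then have "negf (negf g) = minf" by simp
  then show "g = minf" by simp
qed

lemma Fr_Fbar: "f \<in> Fr \<Longrightarrow> f \<in> Fbar" by (simp add: Fr_def)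

lemma Fr_meet: "f \<in> Fr \<Longrightarrow> g \<in> Fbar \<Longrightarrow> Fbar_meet_is f g minf \<Longrightarrow> g = minf"
  by (simp add: Fr_def)

lemma Cont_Fr:
  assumes f: "(f::('b::frame) rfun) \<in> Cont" shows "f \<in> Fr"
proof (rule FrI)
  show fF: "f \<in> Fbar" by (rule Cont_Fbar[OF f])
  have nf: "negf f \<in> Cont" by (rule negf_Cont[OF f])
  fix g :: "'b rfun" assume g: "g \<in> Fbar"
  show "Fbar_join_is f g pinf \<Longrightarrow> g = pinf"
    by (rule join_cond[OF fF fF _ _ MC_Cont[OF f g] g]) (simp_all add: rle_def Cont_r6[OF f] pcompl_top)
  show "Fbar_join_is (negf f) g pinf \<Longrightarrow> g = pinf"
    by (rule join_cond[OF Cont_Fbar[OF nf] Cont_Fbar[OF nf] _ _ MC_Cont[OF nf g] g])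
      (simp_all add: rle_def SUP_neg_UNIV Cont_r5[OF f] pcompl_top)
qed


definition constf :: "rat \<Rightarrow> ('b::complete_lattice) rfun" where
  "constf c = (\<lambda>r. if r < c then top else bot, \<lambda>s. if c < s then top else bot)"

lemma constf_Cont: "(constf c :: ('b::frame) rfun) \<in> Cont"
proof (rule ContI)
  show "is_rhom (constf c :: 'b rfun)"
    unfolding is_rhom_def constf_def fst_conv snd_conv
  proof (intro conjI allI impI)
    fix r s :: rat assume "s \<le> r"
    then show "inf (if r < c then top else bot) (if c < s then top else bot) = (bot::'b)" by auto
  next
    fix r :: rat
    show "(if r < c then top else bot) = (SUP s\<in>{s. r < s}. if s < c then top else (bot::'b))"
    proof (cases "r < c")
      case True
      then have "(r + c) / 2 \<in> {s. r < s}" "(r + c) / 2 < c" using mid1 mid2 by auto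
      then have "(top::'b) \<le> (SUP s\<in>{s. r < s}. if s < c then top else (bot::'b))"
        by (intro SUP_upper2[of "(r + c) / 2"]) simp_all
      then show ?thesis using True by (simp add: top_unique)
    next
      case False
      then show ?thesis by (intro order.antisym SUP_least) auto
    qed
  next
    fix s :: rat
    show "(if c < s then top else bot) = (SUP r\<in>{r. r < s}. if c < r then top else (bot::'b))"
    proof (cases "c < s")
      case True
      then have "(c + s) / 2 \<in> {r. r < s}" "c < (c + s) / 2" using mid1 mid2 by auto
      then have "(top::'b) \<le> (SUP r\<in>{r. r < s}. if c < r then top else (bot::'b))"
        by (intro SUP_upper2[of "(c + s) / 2"]) simp_all
      then show ?thesis using True by (simp add: top_unique)
    next
      case False
      then show ?thesis by (intro order.antisym SUP_least) auto
    qed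
  qed
next
  fix r s :: rat assume "r < s"
  then show "sup (fst (constf c :: 'b rfun) r) (snd (constf c :: 'b rfun) s) = top"
    by (auto simp: constf_def)
next
  have "(top::'b) \<le> (SUP r. fst (constf c :: 'b rfun) r)"
    by (rule SUP_upper2[of "c - 1"]) (simp_all add: constf_def)
  then show "(SUP r. fst (constf c :: 'b rfun) r) = top" by (simp add: top_unique)
  have "(top::'b) \<le> (SUP r. snd (constf c :: 'b rfun) r)"
    by (rule SUP_upper2[of "c + 1"]) (simp_all add: constf_def)
  then show "(SUP r. snd (constf c :: 'b rfun) r) = top" by (simp add: top_unique)
qed

lemma join_cond_bounded:
  assumes f: "(f::('b::frame) rfun) \<in> Fbar" and b: "rle f (constf c)"
    and g: "g \<in> Fbar" and J: "Fbar_join_is f g pinf"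
  shows "g = pinf"
  by (rule join_cond[OF f Cont_Fbar[OF constf_Cont] b _ MC_Cont[OF constf_Cont g] g J])
    (simp add: Cont_r6[OF constf_Cont] pcompl_top)

section \<open>Forward direction: extremal disconnectedness\<close>

definition edf :: "'b::frame \<Rightarrow> 'b rfun" where
  "edf a = (\<lambda>r. if r < 0 then top else if r < 1 then pcompl (pcompl a) else bot,
            \<lambda>s. if s \<le> 0 then bot else if s \<le> 1 then pcompl a else top)"

lemma edf_Fbar: "edf (a::'b::frame) \<in> Fbar"
proof (rule FbarI)
  let ?x = "pcompl (pcompl a)" and ?y = "pcompl a"
  have xy: "inf ?x ?y = bot" by (rule pcompl_inf)
  show "is_rhom (edf a)"
    unfolding is_rhom_def edf_def fst_conv snd_conv
  proof (intro conjI allI impI)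
    fix r s :: rat assume "s \<le> r"
    then show "inf (if r < 0 then top else if r < 1 then ?x else bot) (if s \<le> 0 then bot else if s \<le> 1 then ?y else top) = bot"
      using xy by auto
  next
    fix r :: rat
    show "(if r < 0 then top else if r < 1 then ?x else bot) = (SUP s\<in>{s. r < s}. if s < 0 then top else if s < 1 then ?x else bot)"
    proof (cases "r < 0")
      case True
      then have "top \<le> (SUP s\<in>{s. r < s}. if s < 0 then top else if s < 1 then ?x else bot)"
        by (intro SUP_upper2[of "r / 2"]) simp_all
      then show ?thesis using True by (simp add: top_unique)
    next
      case F1: False
      show ?thesis
      proof (cases "r < 1")
        case True
        then have "(r + 1) / 2 \<in> {s. r < s}" "(r + 1) / 2 < 1" using mid1 mid2 by auto
        then have "?x \<le> (SUP s\<in>{s. r < s}. if s < 0 then top else if s < 1 then ?x else bot)"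
          using F1 by (intro SUP_upper2[of "(r + 1) / 2"]) simp_all
        moreover have "(SUP s\<in>{s. r < s}. if s < 0 then top else if s < 1 then ?x else bot) \<le> ?x"
          using F1 by (intro SUP_least) auto
        ultimately show ?thesis using True F1 by simp
      next
        case False
        then show ?thesis using F1 by (intro order.antisym SUP_least) auto
      qed
    qed
  next
    fix s :: rat
    show "(if s \<le> 0 then bot else if s \<le> 1 then ?y else top) = (SUP r\<in>{r. r < s}. if r \<le> 0 then bot else if r \<le> 1 then ?y else top)"
    proof (cases "s \<le> 0")
      case True
      then show ?thesis by (intro order.antisym SUP_least) auto
    next
      case F1: False
      show ?thesis
      proof (cases "s \<le> 1")
        case True
        then have "s / 2 \<in> {r. r < s}" "s / 2 \<le> 1" "\<not> s / 2 \<le> 0" using F1 by auto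
        then have "?y \<le> (SUP r\<in>{r. r < s}. if r \<le> 0 then bot else if r \<le> 1 then ?y else top)"
          by (intro SUP_upper2[of "s / 2"]) simp_all
        moreover have "(SUP r\<in>{r. r < s}. if r \<le> 0 then bot else if r \<le> 1 then ?y else top) \<le> ?y"
          using True by (intro SUP_least) auto
        ultimately show ?thesis using True F1 by simp
      next
        case False
        then have "(1 + s) / 2 \<in> {r. r < s}" "\<not> (1 + s) / 2 \<le> 1" "\<not> (1 + s) / 2 \<le> 0" 
          using mid1[of 1 s] mid2[of 1 s] by auto
        then have "top \<le> (SUP r\<in>{r. r < s}. if r \<le> 0 then bot else if r \<le> 1 then ?y else top)"
          by (intro SUP_upper2[of "(1 + s) / 2"]) simp_all
        then show ?thesis using False F1 by (simp add: top_unique)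
      qed
    qed
  qed
next
  fix r s :: rat assume rs: "r < s"
  show "pcompl (fst (edf a) r) \<le> snd (edf a) s"
    using rs by (auto simp: edf_def pcompl_top pcompl3)
  show "pcompl (snd (edf a) s) \<le> fst (edf a) r"
    using rs by (auto simp: edf_def pcompl_top)
qed

lemma edf_bound1: "rle (edf a) (constf 1)"
  by (auto simp: rle_def edf_def constf_def)

lemma edf_bound2: "rle (negf (edf a)) (constf 0)"
  by (auto simp: rle_def edf_def constf_def)

lemma edf_Fr: "edf (a::'b::frame) \<in> Fr"
proof (rule FrI[OF edf_Fbar])
  fix g :: "'b rfun" assume g: "g \<in> Fbar"
  show "Fbar_join_is (edf a) g pinf \<Longrightarrow> g = pinf"
    by (rule join_cond_bounded[OF edf_Fbar edf_bound1 g])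
  show "Fbar_join_is (negf (edf a)) g pinf \<Longrightarrow> g = pinf"
    by (rule join_cond_bounded[OF negf_Fbar[OF edf_Fbar] edf_bound2 g])
qed

lemma forward_ED:
  assumes "(Fr :: ('b::frame) rfun set) = Cont"
  shows "sup (pcompl a) (pcompl (pcompl (a::'b))) = top"
proof -
  have "edf a \<in> Cont" using edf_Fr[of a] assms by simp
  from Cont_r2[OF this, of 0 1] show ?thesis by (simp add: edf_def sup_commute)
qed


section \<open>Forward direction: P-frame\<close>

definition Uf :: "('b::complete_lattice) rfun \<Rightarrow> rat \<Rightarrow> 'b" where
  "Uf f t = sup (fst f t) (snd f (-t))"
definition Df :: "('b::complete_lattice) rfun \<Rightarrow> rat \<Rightarrow> 'b" where
  "Df f t = inf (fst f (-t)) (snd f t)"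

lemma inf_SUP_SUP: "inf (SUP x\<in>X. F x) (SUP y\<in>Y. G y) = (SUP x\<in>X. SUP y\<in>Y. inf (F x) (G y :: 'b::frame))"
  unfolding SUP_inf_frame by (simp only: inf_SUP_frame)

context
  fixes f :: "('b::frame) rfun"
  assumes fC: "f \<in> Cont"
begin

lemma fR: "is_rhom f" by (rule Cont_rhom[OF fC])

lemma D1: "t \<le> t' \<Longrightarrow> inf (Df f t) (Uf f t') = bot"
proof -
  assume tt: "t \<le> t'"
  have "inf (Df f t) (Uf f t') = sup (inf (Df f t) (fst f t')) (inf (Df f t) (snd f (-t')))"
    unfolding Uf_def by (rule inf_sup_distrib1)
  also have "\<dots> \<le> sup (inf (snd f t) (fst f t')) (inf (fst f (-t)) (snd f (-t')))"
    unfolding Df_def by (intro sup_mono inf_mono) simp_all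
  also have "\<dots> = bot" using rhom_r1[OF fR tt] rhom_r1[OF fR, of "-t'" "-t"] tt by (simp add: inf_commute)
  finally show ?thesis by (simp add: bot_unique)
qed

lemma D2: "t < t' \<Longrightarrow> sup (Uf f t) (Df f t') = top"
proof -
  assume tt: "t < t'"
  have "sup (Uf f t) (Df f t') = inf (sup (Uf f t) (fst f (-t'))) (sup (Uf f t) (snd f t'))"
    unfolding Df_def by (rule sup_inf_distrib1)
  moreover have "sup (Uf f t) (fst f (-t')) = top"
  proof -
    have "-t' < -t" using tt by simp
    then have "sup (fst f (-t')) (snd f (-t)) = top" by (rule Cont_r2[OF fC])
    then show ?thesis unfolding Uf_def by (metis sup_left_commute sup_top_right sup_commute)
  qed
  moreover have "sup (Uf f t) (snd f t') = top"
    using Cont_r2[OF fC tt] unfolding Uf_def by (metis sup_assoc sup_commute sup_top_right)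
  ultimately show ?thesis by simp
qed

lemma D_mono: "t \<le> t' \<Longrightarrow> Df f t \<le> Df f t'"
  unfolding Df_def by (intro inf_mono rhom_u_anti[OF fR] rhom_d_mono[OF fR]) simp_all

lemma U_anti: "t \<le> t' \<Longrightarrow> Uf f t' \<le> Uf f t"
  unfolding Uf_def by (intro sup_mono rhom_u_anti[OF fR] rhom_d_mono[OF fR]) simp_all

lemma U_le_a: "0 < t \<Longrightarrow> Uf f t \<le> sup (snd f 0) (fst f 0)"
  unfolding Uf_def by (intro sup_least le_supI1 le_supI2 rhom_u_anti[OF fR] rhom_d_mono[OF fR]) simp_all

lemma D3:
  assumes r: "0 < r"
  shows "Df f (1/r) \<le> (SUP s\<in>{s. r < s}. Df f (1/s))"
proof -
  have "Df f (1/r) = inf (SUP x\<in>{x. -(1/r) < x}. fst f x) (SUP y\<in>{y. y < 1/r}. snd f y)"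
    unfolding Df_def by (simp only: rhom_u[OF fR, symmetric] rhom_d[OF fR, symmetric])
  also have "\<dots> = (SUP x\<in>{x. -(1/r) < x}. SUP y\<in>{y. y < 1/r}. inf (fst f x) (snd f y))"
    by (rule inf_SUP_SUP)
  also have "\<dots> \<le> (SUP s\<in>{s. r < s}. Df f (1/s))"
  proof (intro SUP_least)
    fix x y assume x: "x \<in> {x. -(1/r) < x}" and y: "y \<in> {y. y < 1/r}"
    define t where "t = max (max (-x) y) (1/(2*r))"
    have h2: "0 < 1/(2*r)" "1/(2*r) < 1/r" using r by (simp_all add: field_simps)
    have "1/(2*r) \<le> t" unfolding t_def by simp
    then have t0: "0 < t" using h2 by linarith
    have tr: "t < 1/r" unfolding t_def using x y h2 by simp
    have "r < 1/t" using t0 tr r by (simp add: field_simps)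
    moreover have "inf (fst f x) (snd f y) \<le> Df f (1/(1/t))"
      unfolding Df_def using x y unfolding t_def
      by (intro inf_mono rhom_u_anti[OF fR] rhom_d_mono[OF fR]) (simp_all add: max_def)
    ultimately show "inf (fst f x) (snd f y) \<le> (SUP s\<in>{s. r < s}. Df f (1/s))"
      by (intro SUP_upper2[of "1/t"]) simp_all
  qed
  finally show ?thesis .
qed

lemma D0: "(SUP t\<in>{t. 0 < t}. Df f t) = top"
proof -
  have "top = inf (SUP x. fst f x) (SUP y. snd f y)" using Cont_r5[OF fC] Cont_r6[OF fC] by simp
  also have "\<dots> = (SUP x. SUP y. inf (fst f x) (snd f y))" by (rule inf_SUP_SUP)
  also have "\<dots> \<le> (SUP t\<in>{t. 0 < t}. Df f t)"
  proof (intro SUP_least)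
    fix x y :: rat
    define t where "t = max \<bar>x\<bar> \<bar>y\<bar> + 1"
    have "0 \<le> max \<bar>x\<bar> \<bar>y\<bar>" by simp
    then have "0 < t" unfolding t_def by linarith
    moreover have "inf (fst f x) (snd f y) \<le> Df f t" unfolding Df_def t_def
      by (intro inf_mono rhom_u_anti[OF fR] rhom_d_mono[OF fR]) (simp_all add: max_def abs_if)
    ultimately show "inf (fst f x) (snd f y) \<le> (SUP t\<in>{t. 0 < t}. Df f t)"
      by (intro SUP_upper2[of t]) simp_all
  qed
  finally show ?thesis by (simp add: top_unique)
qed

definition hf :: "'b rfun" where
  "hf = (\<lambda>r. if r < 0 then top else if r = 0 then pcompl (pcompl (sup (snd f 0) (fst f 0)))
                else inf (Df f (1/r)) (pcompl (pcompl (sup (snd f 0) (fst f 0)))),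
         \<lambda>s. if s \<le> 0 then bot else sup (Uf f (1/s)) (pcompl (sup (snd f 0) (fst f 0))))"


abbreviation "aa \<equiv> sup (snd f 0) (fst f 0)"

lemma hf_fst: "fst hf r = (if r < 0 then top else if r = 0 then pcompl (pcompl aa)
                else inf (Df f (1/r)) (pcompl (pcompl aa)))"
  by (simp add: hf_def)
lemma hf_snd: "snd hf s = (if s \<le> 0 then bot else sup (Uf f (1/s)) (pcompl aa))"
  by (simp add: hf_def)

lemma U1:
  assumes s: "0 < s"
  shows "Uf f (1/s) \<le> (SUP t\<in>{t. t < s}. snd hf t)"
proof -
  have "fst f (1/s) \<le> (SUP t\<in>{t. t < s}. snd hf t)"
  proof (subst rhom_u[OF fR], rule SUP_least)
    fix x assume x: "x \<in> {x. 1/s < x}"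
    then have x0: "0 < x" using s by (simp add: less_trans[of 0 "1/s"])
    have "1/x < s" using x x0 s by (simp add: field_simps)
    moreover have "0 < 1/x" using x0 by simp
    moreover have "fst f x \<le> snd hf (1/x)" using x0 by (simp add: hf_snd Uf_def)
        (rule le_supI1, rule le_supI1, rule order_refl)
    ultimately show "fst f x \<le> (SUP t\<in>{t. t < s}. snd hf t)"
      by (intro SUP_upper2[of "1/x"]) simp_all
  qed
  moreover have "snd f (-(1/s)) \<le> (SUP t\<in>{t. t < s}. snd hf t)"
  proof (subst rhom_d[OF fR], rule SUP_least)
    fix y assume y: "y \<in> {y. y < -(1/s)}"
    then have y0: "y < 0" using s by (simp add: less_trans[of y "-(1/s)" 0])
    have "-(1/y) < s" using y y0 s by (simp add: field_simps)
    moreover have "0 < -(1/y)" using y0 by simp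
    moreover have "snd f y \<le> snd hf (-(1/y))" using y0 by (simp add: hf_snd Uf_def)
        (rule le_supI1, rule le_supI2, rule order_refl)
    ultimately show "snd f y \<le> (SUP t\<in>{t. t < s}. snd hf t)"
      by (intro SUP_upper2[of "-(1/y)"]) simp_all
  qed
  ultimately show ?thesis unfolding Uf_def by (rule sup_least)
qed

lemma a_le_hf: "sup aa (pcompl aa) \<le> (SUP t. snd hf t)"
proof (rule sup_least)
  have "snd f 0 \<le> (SUP t. snd hf t)"
  proof (subst rhom_d[OF fR], rule SUP_least)
    fix y assume y: "y \<in> {y. y < (0::rat)}"
    have "snd f y \<le> snd hf (-(1/y))" using y by (simp add: hf_snd Uf_def)
        (rule le_supI1, rule le_supI2, rule order_refl)
    then show "snd f y \<le> (SUP t. snd hf t)" by (rule SUP_upper2[of "-(1/y)", OF UNIV_I])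
  qed
  moreover have "fst f 0 \<le> (SUP t. snd hf t)"
  proof (subst rhom_u[OF fR], rule SUP_least)
    fix x assume x: "x \<in> {x. (0::rat) < x}"
    have "fst f x \<le> snd hf (1/x)" using x by (simp add: hf_snd Uf_def)
        (rule le_supI1, rule le_supI1, rule order_refl)
    then show "fst f x \<le> (SUP t. snd hf t)" by (rule SUP_upper2[of "1/x", OF UNIV_I])
  qed
  ultimately show "aa \<le> (SUP t. snd hf t)" by (rule sup_least)
  show "pcompl aa \<le> (SUP t. snd hf t)" by (rule SUP_upper2[of 1]) (simp_all add: hf_snd)
qed

lemma hf_le_a: "(SUP t. snd hf t) \<le> sup aa (pcompl aa)"
proof (rule SUP_least)
  fix t :: rat
  show "snd hf t \<le> sup aa (pcompl aa)"
  proof (cases "t \<le> 0")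
    case False
    then have "Uf f (1/t) \<le> aa" by (intro U_le_a) simp
    then show ?thesis using False unfolding hf_snd by (simp add: le_supI1)
  qed (simp add: hf_snd)
qed

lemma hf_rhom: "is_rhom hf"
  unfolding is_rhom_def
proof (intro conjI allI impI)
  fix r s :: rat assume sr: "s \<le> r"
  show "inf (fst hf r) (snd hf s) = bot"
  proof (cases "s \<le> 0")
    case True then show ?thesis by (simp add: hf_snd)
  next
    case False
    then have s0: "0 < s" and r0: "0 < r" using sr by auto
    have rs: "1/r \<le> 1/s" using s0 r0 sr by (simp add: field_simps)
    have "inf (fst hf r) (snd hf s)
        = inf (inf (Df f (1/r)) (pcompl (pcompl aa))) (sup (Uf f (1/s)) (pcompl aa))"
      using s0 r0 by (simp add: hf_fst hf_snd)
    also have "\<dots> = sup (inf (inf (Df f (1/r)) (pcompl (pcompl aa))) (Uf f (1/s)))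
                       (inf (inf (Df f (1/r)) (pcompl (pcompl aa))) (pcompl aa))"
      by (rule inf_sup_distrib1)
    also have "\<dots> \<le> sup (inf (Df f (1/r)) (Uf f (1/s))) (inf (pcompl (pcompl aa)) (pcompl aa))"
      by (intro sup_mono inf_mono) simp_all
    also have "\<dots> = bot" using D1[OF rs] pcompl_inf[of "pcompl aa"] by simp
    finally show ?thesis by (simp add: bot_unique)
  qed
next
  fix r :: rat
  show "fst hf r = (SUP s\<in>{s. r < s}. fst hf s)"
  proof (cases "r < 0")
    case True
    then have "top \<le> (SUP s\<in>{s. r < s}. fst hf s)"
      by (intro SUP_upper2[of "r/2"]) (simp_all add: hf_fst)
    then show ?thesis using True by (simp add: hf_fst top_unique)
  next
    case F1: False
    show ?thesis
    proof (cases "r = 0")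
      case True
      have "pcompl (pcompl aa) = inf (SUP t\<in>{t. 0 < t}. Df f t) (pcompl (pcompl aa))" by (simp add: D0)
      also have "\<dots> = (SUP t\<in>{t. 0 < t}. inf (Df f t) (pcompl (pcompl aa)))" by (rule SUP_inf_frame)
      also have "\<dots> \<le> (SUP s\<in>{s. 0 < s}. fst hf s)"
      proof (rule SUP_least)
        fix t :: rat assume t: "t \<in> {t. 0 < t}"
        then have "inf (Df f t) (pcompl (pcompl aa)) = fst hf (1/t)" by (simp add: hf_fst)
        then show "inf (Df f t) (pcompl (pcompl aa)) \<le> (SUP s\<in>{s. 0 < s}. fst hf s)"
          using t by (intro SUP_upper2[of "1/t"]) simp_all
      qed
      finally have "pcompl (pcompl aa) \<le> (SUP s\<in>{s. 0 < s}. fst hf s)" .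
      moreover have "(SUP s\<in>{s. 0 < s}. fst hf s) \<le> pcompl (pcompl aa)"
        by (rule SUP_least) (simp add: hf_fst)
      ultimately show ?thesis using True by (simp add: hf_fst)
    next
      case False
      then have r0: "0 < r" using F1 by simp
      have "inf (Df f (1/r)) (pcompl (pcompl aa)) \<le> inf (SUP s\<in>{s. r < s}. Df f (1/s)) (pcompl (pcompl aa))"
        using D3[OF r0] by (rule inf_mono) simp
      also have "\<dots> = (SUP s\<in>{s. r < s}. inf (Df f (1/s)) (pcompl (pcompl aa)))" by (rule SUP_inf_frame)
      also have "\<dots> = (SUP s\<in>{s. r < s}. fst hf s)"
        by (rule SUP_cong) (use r0 in \<open>auto simp: hf_fst\<close>)
      finally have "fst hf r \<le> (SUP s\<in>{s. r < s}. fst hf s)" using r0 by (simp add: hf_fst)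
      moreover have "(SUP s\<in>{s. r < s}. fst hf s) \<le> fst hf r"
      proof (rule SUP_least)
        fix s assume s: "s \<in> {s. r < s}"
        then have s0: "0 < s" using r0 by simp
        have "1/s \<le> 1/r" using s s0 r0 by (simp add: field_simps)
        then have "inf (Df f (1/s)) (pcompl (pcompl aa)) \<le> inf (Df f (1/r)) (pcompl (pcompl aa))"
          by (rule inf_mono[OF D_mono order_refl])
        then show "fst hf s \<le> fst hf r" using s0 r0 by (simp add: hf_fst)
      qed
      ultimately show ?thesis by (rule order.antisym)
    qed
  qed
next
  fix s :: rat
  show "snd hf s = (SUP r\<in>{r. r < s}. snd hf r)"
  proof (cases "s \<le> 0")
    case True
    then show ?thesis by (intro order.antisym SUP_least) (auto simp: hf_snd)
  next
    case False
    then have s0: "0 < s" by simp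
    have "(SUP r\<in>{r. r < s}. snd hf r) \<le> snd hf s"
    proof (rule SUP_least)
      fix t assume t: "t \<in> {r. r < s}"
      show "snd hf t \<le> snd hf s"
      proof (cases "t \<le> 0")
        case False
        then have "1/s \<le> 1/t" using t s0 by (simp add: field_simps)
        then have "Uf f (1/t) \<le> Uf f (1/s)" by (rule U_anti)
        then show ?thesis using False s0 by (simp add: hf_snd le_supI1)
      qed (simp add: hf_snd)
    qed
    moreover have "snd hf s \<le> (SUP r\<in>{r. r < s}. snd hf r)"
    proof -
      have "pcompl aa \<le> snd hf (s/2)" using s0 by (simp add: hf_snd)
      also have "\<dots> \<le> (SUP r\<in>{r. r < s}. snd hf r)" using s0 by (intro SUP_upper) simp
      finally show ?thesis using U1[OF s0] s0 by (simp add: hf_snd)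
    qed
    ultimately show ?thesis by (rule order.antisym[rotated])
  qed
qed

lemma hf_Fbar: "hf \<in> Fbar"
proof (rule FbarI[OF hf_rhom])
  fix r s :: rat assume rs: "r < s"
  show "pcompl (fst hf r) \<le> snd hf s"
  proof (cases "r < 0")
    case True then show ?thesis by (simp add: hf_fst pcompl_top)
  next
    case F1: False
    then have s0: "0 < s" using rs by simp
    show ?thesis
    proof (cases "r = 0")
      case True then show ?thesis using s0 by (simp add: hf_fst hf_snd pcompl3)
    next
      case False
      then have r0: "0 < r" using F1 by simp
      have lt: "1/s < 1/r" using rs r0 s0 by (simp add: field_simps)
      define z where "z = pcompl (inf (Df f (1/r)) (pcompl (pcompl aa)))"
      have "inf (inf z (Df f (1/r))) (pcompl (pcompl aa)) = bot"
        unfolding z_def using pcompl_inf[of "inf (Df f (1/r)) (pcompl (pcompl aa))"] by (simp add: ac_simps)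
      then have "inf z (Df f (1/r)) \<le> pcompl (pcompl (pcompl aa))" by (simp add: le_pcompl_iff)
      then have A: "inf z (Df f (1/r)) \<le> pcompl aa" by (simp add: pcompl3)
      have "z = inf z (sup (Uf f (1/s)) (Df f (1/r)))" using D2[OF lt] by simp
      also have "\<dots> = sup (inf z (Uf f (1/s))) (inf z (Df f (1/r)))" by (rule inf_sup_distrib1)
      also have "\<dots> \<le> sup (Uf f (1/s)) (pcompl aa)" using A by (intro sup_mono) simp_all
      finally show ?thesis using r0 s0 unfolding z_def by (simp add: hf_fst hf_snd)
    qed
  qed
  show "pcompl (snd hf s) \<le> fst hf r"
  proof (cases "r < 0")
    case True then show ?thesis by (simp add: hf_fst)
  next
    case F1: False
    then have s0: "0 < s" using rs by simp
    have X: "pcompl (sup (Uf f (1/s)) (pcompl aa)) \<le> pcompl (pcompl aa)" by (rule pcompl_anti) simp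
    show ?thesis
    proof (cases "r = 0")
      case True then show ?thesis using s0 X by (simp add: hf_fst hf_snd)
    next
      case False
      then have r0: "0 < r" using F1 by simp
      have lt: "1/s < 1/r" using rs r0 s0 by (simp add: field_simps)
      have "pcompl (sup (Uf f (1/s)) (pcompl aa)) \<le> pcompl (Uf f (1/s))" by (rule pcompl_anti) simp
      also have "\<dots> \<le> Df f (1/r)" by (rule pcompl_le_of_sup[OF D2[OF lt]])
      finally show ?thesis using X r0 s0 by (simp add: hf_fst hf_snd)
    qed
  qed
qed

lemma hf_Fr:
  assumes ed: "\<And>a::'b. sup (pcompl a) (pcompl (pcompl a)) = top"
  shows "hf \<in> Fr"
proof (rule FrI[OF hf_Fbar])
  fix g :: "'b rfun" assume g: "g \<in> Fbar"
  have d1: "pcompl (SUP s. snd hf s) = bot"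
    using pcompl_anti[OF a_le_hf] pcompl_dense_bot[of aa] by (simp add: bot_unique)
  show "Fbar_join_is hf g pinf \<Longrightarrow> g = pinf"
    by (rule join_cond[OF hf_Fbar hf_Fbar _ d1 MC_ED[OF ed hf_Fbar g] g]) (simp add: rle_def)
  have "top \<le> (SUP s. snd (negf hf) s)" by (rule SUP_upper2[of 1]) (simp_all add: hf_fst)
  then have d2: "pcompl (SUP s. snd (negf hf) s) = bot" by (simp add: top_unique pcompl_top)
  show "Fbar_join_is (negf hf) g pinf \<Longrightarrow> g = pinf"
    by (rule join_cond[OF negf_Fbar[OF hf_Fbar] negf_Fbar[OF hf_Fbar] _ d2
          MC_ED[OF ed negf_Fbar[OF hf_Fbar] g] g]) (simp add: rle_def)
qed

lemma forward_P:
  assumes ed: "\<And>a::'b. sup (pcompl a) (pcompl (pcompl a)) = top"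
    and FC: "(Fr :: 'b rfun set) = Cont"
  shows "inf aa (pcompl aa) = bot \<and> sup aa (pcompl aa) = top"
proof
  show "inf aa (pcompl aa) = bot" by (rule pcompl_inf2)
  have "hf \<in> Cont" using hf_Fr[OF ed] FC by simp
  then have "(SUP s. snd hf s) = top" by (rule Cont_r6)
  then show "sup aa (pcompl aa) = top" using hf_le_a by (simp add: top_unique)
qed

end


section \<open>Reparametrisation of the rationals\<close>

definition tu :: "rat \<Rightarrow> rat" where "tu y = y / (1 - \<bar>y\<bar>)"
definition sg :: "rat \<Rightarrow> rat" where "sg x = x / (1 + \<bar>x\<bar>)"
lemma sg_pos: "0 \<le> x \<Longrightarrow> sg x = x / (1 + x)" by (simp add: sg_def)
lemma sg_neg: "x < 0 \<Longrightarrow> sg x = x / (1 - x)" by (simp add: sg_def)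
lemma sg_bound: "\<bar>sg x\<bar> < 1"
proof -
  have p: "0 < 1 + \<bar>x\<bar>" by (simp add: add_pos_nonneg)
  have "\<bar>sg x\<bar> = \<bar>x\<bar> / (1 + \<bar>x\<bar>)" unfolding sg_def using p by simp
  also have "\<dots> < 1" using p by simp
  finally show ?thesis .
qed

lemma sg_mono: "x < y \<Longrightarrow> sg x < sg y"
proof (cases "0 \<le> x")
  case True
  assume xy: "x < y"
  then have y0: "0 \<le> y" using True by simp
  have "x * (1 + y) < y * (1 + x)" using xy by (simp add: algebra_simps)
  then have "x / (1 + x) < y / (1 + y)" using True y0 by (simp add: divide_simps)
  then show ?thesis using True y0 by (simp add: sg_pos)
next
  case False
  assume xy: "x < y"
  show ?thesis
  proof (cases "0 \<le> y")
    case True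
    have "x / (1 - x) < 0" using False by (simp add: divide_neg_pos)
    moreover have "0 \<le> y / (1 + y)" using True by simp
    ultimately have "x / (1 - x) < y / (1 + y)" by (rule less_le_trans)
    then show ?thesis using True False by (simp add: sg_pos sg_neg)
  next
    case F2: False
    have "x * (1 - y) < y * (1 - x)" using xy by (simp add: algebra_simps)
    then have "x / (1 - x) < y / (1 - y)" using False F2 by (simp add: divide_simps)
    then show ?thesis using False F2 by (simp add: sg_neg)
  qed
qed

lemma tu_sg: "tu (sg x) = x"
proof (cases "0 \<le> x")
  case True
  have p: "0 < 1 + x" using True by simp
  have e: "sg x = x / (1 + x)" using True by (simp add: sg_pos)
  have "0 \<le> sg x" using True e by simp
  then have "tu (sg x) = sg x / (1 - sg x)" by (simp add: tu_def)
  also have "\<dots> = x / (1 + x) / (1 - x / (1 + x))" by (simp only: e)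
  also have "\<dots> = x" using p by (simp add: divide_simps)
  finally show ?thesis .
next
  case False
  have p: "0 < 1 - x" using False by simp
  have e: "sg x = x / (1 - x)" using False by (simp add: sg_neg)
  have "sg x < 0" using False p e by (simp add: divide_neg_pos)
  then have "tu (sg x) = sg x / (1 + sg x)" by (simp add: tu_def)
  also have "\<dots> = x / (1 - x) / (1 + x / (1 - x))" by (simp only: e)
  also have "\<dots> = x" using p by (simp add: divide_simps)
  finally show ?thesis .
qed
lemma sg_tu: "\<bar>y\<bar> < 1 \<Longrightarrow> sg (tu y) = y"
proof (cases "0 \<le> y")
  case True
  assume "\<bar>y\<bar> < 1"
  then have p: "0 < 1 - y" using True by simp
  have "tu y = y / (1 - y)" using True by (simp add: tu_def)
  moreover have "0 \<le> y / (1 - y)" using True p by simp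
  moreover have "y / (1 - y) / (1 + y / (1 - y)) = y" using p by (simp add: divide_simps)
  ultimately show ?thesis by (simp add: sg_pos)
next
  case False
  assume "\<bar>y\<bar> < 1"
  then have p: "0 < 1 + y" using False by simp
  have "tu y = y / (1 + y)" using False by (simp add: tu_def)
  moreover have "y / (1 + y) < 0" using False p by (simp add: divide_neg_pos)
  moreover have "y / (1 + y) / (1 - y / (1 + y)) = y" using p by (simp add: divide_simps)
  ultimately show ?thesis by (simp add: sg_neg)
qed
lemma tu_mono: "\<bar>x\<bar> < 1 \<Longrightarrow> \<bar>y\<bar> < 1 \<Longrightarrow> x < y \<Longrightarrow> tu x < tu y"
proof (rule ccontr)
  assume a: "\<bar>x\<bar> < 1" "\<bar>y\<bar> < 1" "x < y" "\<not> tu x < tu y"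
  then have "tu y \<le> tu x" by simp
  then have "sg (tu y) \<le> sg (tu x)" using sg_mono[of "tu y" "tu x"] by (cases "tu y = tu x") auto
  then show False using a sg_tu by simp
qed

section \<open>Reverse direction\<close>

lemma sup_top_mono: "sup a b = top \<Longrightarrow> a \<le> a' \<Longrightarrow> b \<le> b' \<Longrightarrow> sup a' b' = (top::'b::complete_lattice)"
  by (metis sup_mono top_unique)

definition psi :: "('b::complete_lattice) rfun \<Rightarrow> 'b rfun" where
  "psi f = (\<lambda>r. if r < 0 then top else if r = 0 then (SUP x. fst f x) else if r < 2 then fst f (tu (r - 1)) else bot,
            \<lambda>s. if s \<le> 0 then bot else if s < 2 then snd f (tu (s - 1)) else if s = 2 then (SUP x. snd f x) else top)"

lemma psi_fst: "fst (psi f) r = (if r < 0 then top else if r = 0 then (SUP x. fst f x) else if r < 2 then fst f (tu (r - 1)) else bot)"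
  by (simp add: psi_def)
lemma psi_snd: "snd (psi f) s = (if s \<le> 0 then bot else if s < 2 then snd f (tu (s - 1)) else if s = 2 then (SUP x. snd f x) else top)"
  by (simp add: psi_def)

lemma in02: "0 < r \<Longrightarrow> r < 2 \<Longrightarrow> \<bar>r - 1\<bar> < (1::rat)" by (simp add: abs_if)
lemma sg1: "0 < sg x + 1" "sg x + 1 < 2" using sg_bound[of x] by (simp_all add: abs_if split: if_splits)
lemma sg1_tu: "tu (sg x + 1 - 1) = x" by (simp add: tu_sg)

lemma psi_fst_sg: "fst (psi f) (sg x + 1) = fst f x"
  using sg1[of x] by (simp add: psi_fst tu_sg)
lemma psi_snd_sg: "snd (psi f) (sg x + 1) = snd f x"
  using sg1[of x] by (simp add: psi_snd tu_sg)

lemma psi_Cont: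
  assumes R: "is_rhom (f::('b::frame) rfun)" and R2: "\<And>r s. r < s \<Longrightarrow> sup (fst f r) (snd f s) = top"
  shows "psi f \<in> Cont"
proof (rule ContI)
  show "is_rhom (psi f)"
    unfolding is_rhom_def
  proof (intro conjI allI impI)
    fix r s :: rat assume sr: "s \<le> r"
    show "inf (fst (psi f) r) (snd (psi f) s) = bot"
    proof (cases "s \<le> 0")
      case True then show ?thesis by (simp add: psi_snd)
    next
      case False
      show ?thesis
      proof (cases "r < 2")
        case True
        then have "0 < s" "s < 2" "0 < r" using False sr by auto
        then have "tu (s - 1) \<le> tu (r - 1)"
          using sr tu_mono[of "s - 1" "r - 1"] in02[of s] in02[of r] True
          by (cases "s = r") auto
        then show ?thesis using \<open>0 < s\<close> \<open>s < 2\<close> \<open>0 < r\<close> True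
          by (simp add: psi_fst psi_snd rhom_r1[OF R])
      next
        case False
        then show ?thesis using sr by (simp add: psi_fst)
      qed
    qed
  next
    fix r :: rat
    show "fst (psi f) r = (SUP s\<in>{s. r < s}. fst (psi f) s)"
    proof (cases "r < 0")
      case True
      then have "top \<le> (SUP s\<in>{s. r < s}. fst (psi f) s)"
        by (intro SUP_upper2[of "r/2"]) (simp_all add: psi_fst)
      then show ?thesis using True by (simp add: psi_fst top_unique)
    next
      case F0: False
      show ?thesis
      proof (cases "r = 0")
        case True
        have "(SUP x. fst f x) \<le> (SUP s\<in>{s. 0 < s}. fst (psi f) s)"
        proof (rule SUP_least)
          fix x show "fst f x \<le> (SUP s\<in>{s. 0 < s}. fst (psi f) s)"
            using sg1[of x] by (intro SUP_upper2[of "sg x + 1"]) (simp_all add: psi_fst_sg)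
        qed
        moreover have "(SUP s\<in>{s. 0 < s}. fst (psi f) s) \<le> (SUP x. fst f x)"
        proof (rule SUP_least)
          fix s :: rat assume "s \<in> {s. 0 < s}"
          then show "fst (psi f) s \<le> (SUP x. fst f x)" by (auto simp: psi_fst intro: SUP_upper)
        qed
        ultimately show ?thesis using True by (simp add: psi_fst)
      next
        case F1: False
        then have r0: "0 < r" using F0 by simp
        show ?thesis
        proof (cases "r < 2")
          case True
          have "fst f (tu (r - 1)) \<le> (SUP s\<in>{s. r < s}. fst (psi f) s)"
          proof (subst rhom_u[OF R], rule SUP_least)
            fix x assume x: "x \<in> {x. tu (r - 1) < x}"
            have "r - 1 < sg x" using sg_mono[of "tu (r - 1)" x] x sg_tu[OF in02[OF r0 True]] by simp
            then have "r < sg x + 1" by simp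
            then show "fst f x \<le> (SUP s\<in>{s. r < s}. fst (psi f) s)"
              by (intro SUP_upper2[of "sg x + 1"]) (simp_all add: psi_fst_sg)
          qed
          moreover have "(SUP s\<in>{s. r < s}. fst (psi f) s) \<le> fst f (tu (r - 1))"
          proof (rule SUP_least)
            fix s assume s: "s \<in> {s. r < s}"
            show "fst (psi f) s \<le> fst f (tu (r - 1))"
            proof (cases "s < 2")
              case True
              then have "tu (r - 1) < tu (s - 1)" using s r0 in02 tu_mono[of "r - 1" "s - 1"] by simp
              then show ?thesis using True s r0 by (simp add: psi_fst rhom_u_anti[OF R])
            qed (use s r0 in \<open>simp add: psi_fst\<close>)
          qed
          ultimately show ?thesis using True r0 by (simp add: psi_fst)
        next
          case False
          then show ?thesis using r0 by (intro order.antisym SUP_least) (auto simp: psi_fst)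
        qed
      qed
    qed
  next
    fix s :: rat
    show "snd (psi f) s = (SUP r\<in>{r. r < s}. snd (psi f) r)"
    proof (cases "s \<le> 0")
      case True
      then show ?thesis by (intro order.antisym SUP_least) (auto simp: psi_snd)
    next
      case F0: False
      then have s0: "0 < s" by simp
      show ?thesis
      proof (cases "s < 2")
        case True
        have "snd f (tu (s - 1)) \<le> (SUP r\<in>{r. r < s}. snd (psi f) r)"
        proof (subst rhom_d[OF R], rule SUP_least)
          fix y assume y: "y \<in> {y. y < tu (s - 1)}"
          have "sg y < s - 1" using sg_mono[of y "tu (s - 1)"] y sg_tu[OF in02[OF s0 True]] by simp
          then have "sg y + 1 < s" by simp
          then show "snd f y \<le> (SUP r\<in>{r. r < s}. snd (psi f) r)"
            by (intro SUP_upper2[of "sg y + 1"]) (simp_all add: psi_snd_sg)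
        qed
        moreover have "(SUP r\<in>{r. r < s}. snd (psi f) r) \<le> snd f (tu (s - 1))"
        proof (rule SUP_least)
          fix t assume t: "t \<in> {r. r < s}"
          show "snd (psi f) t \<le> snd f (tu (s - 1))"
          proof (cases "t \<le> 0")
            case False
            then have "tu (t - 1) < tu (s - 1)" using t True in02 tu_mono[of "t - 1" "s - 1"] by simp
            then show ?thesis using True t False by (simp add: psi_snd rhom_d_mono[OF R])
          qed (simp add: psi_snd)
        qed
        ultimately show ?thesis using True s0 by (simp add: psi_snd)
      next
        case F2: False
        show ?thesis
        proof (cases "s = 2")
          case True
          have "(SUP x. snd f x) \<le> (SUP r\<in>{r. r < 2}. snd (psi f) r)"
          proof (rule SUP_least)
            fix x show "snd f x \<le> (SUP r\<in>{r. r < 2}. snd (psi f) r)"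
              using sg1[of x] by (intro SUP_upper2[of "sg x + 1"]) (simp_all add: psi_snd_sg)
          qed
          moreover have "(SUP r\<in>{r. r < 2}. snd (psi f) r) \<le> (SUP x. snd f x)"
          proof (rule SUP_least)
            fix t :: rat assume "t \<in> {r. r < 2}"
            then show "snd (psi f) t \<le> (SUP x. snd f x)" by (auto simp: psi_snd intro: SUP_upper)
          qed
          ultimately show ?thesis using True by (simp add: psi_snd)
        next
          case False
          then have s2: "2 < s" using F2 by simp
          then have "(s + 2) / 2 < s" "2 < (s + 2) / 2" using mid1[of 2 s] mid2[of 2 s] by simp_all
          then have "top \<le> (SUP r\<in>{r. r < s}. snd (psi f) r)"
            by (intro SUP_upper2[of "(s + 2) / 2"]) (simp_all add: psi_snd)
          then show ?thesis using s2 by (simp add: psi_snd top_unique)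
        qed
      qed
    qed
  qed
next
  fix r s :: rat assume rs: "r < s"
  show "sup (fst (psi f) r) (snd (psi f) s) = top"
  proof (cases "r < 0 \<or> 2 < s")
    case True then show ?thesis by (auto simp: psi_fst psi_snd)
  next
    case False
    then have r0: "0 \<le> r" and s2: "s \<le> 2" by auto
    have s0: "0 < s" using r0 rs by simp
    show ?thesis
    proof (cases "r = 0")
      case True
      show ?thesis
      proof (cases "s = 2")
        case True
        have "fst f 0 \<le> (SUP x. fst f x)" "snd f 1 \<le> (SUP x. snd f x)" by (simp_all add: SUP_upper)
        then show ?thesis using R2[of 0 1] \<open>r = 0\<close> True by (simp add: psi_fst psi_snd sup_top_mono)
      next
        case False
        then have "s < 2" using s2 by simp
        have "fst f (tu (s - 1) - 1) \<le> (SUP x. fst f x)" by (simp add: SUP_upper)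
        then show ?thesis using R2[of "tu (s - 1) - 1" "tu (s - 1)"] \<open>r = 0\<close> s0 \<open>s < 2\<close>
          by (simp add: psi_fst psi_snd sup_top_mono)
      qed
    next
      case False
      then have r0': "0 < r" "r < 2" using r0 rs s2 by auto
      show ?thesis
      proof (cases "s = 2")
        case True
        have "snd f (tu (r - 1) + 1) \<le> (SUP x. snd f x)" by (simp add: SUP_upper)
        then show ?thesis using R2[of "tu (r - 1)" "tu (r - 1) + 1"] r0' True
          by (simp add: psi_fst psi_snd sup_top_mono)
      next
        case False
        then have "s < 2" using s2 by simp
        then have "tu (r - 1) < tu (s - 1)" using rs r0' s0 in02 tu_mono[of "r - 1" "s - 1"] by simp
        then show ?thesis using R2[of "tu (r - 1)" "tu (s - 1)"] r0' s0 \<open>s < 2\<close>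
          by (simp add: psi_fst psi_snd)
      qed
    qed
  qed
next
  have "top \<le> (SUP r. fst (psi f) r)" by (rule SUP_upper2[of "-1"]) (simp_all add: psi_fst)
  then show "(SUP r. fst (psi f) r) = top" by (simp add: top_unique)
  have "top \<le> (SUP r. snd (psi f) r)" by (rule SUP_upper2[of 3]) (simp_all add: psi_snd)
  then show "(SUP r. snd (psi f) r) = top" by (simp add: top_unique)
qed

lemma cozero_SUP:
  assumes R: "is_rhom (f::('b::frame) rfun)" and R2: "\<And>r s. r < s \<Longrightarrow> sup (fst f r) (snd f s) = top"
  shows "is_cozero (SUP x. fst f x)"
  unfolding is_cozero_def
  by (rule bexI[OF _ psi_Cont[OF R R2]]) (simp add: psi_fst psi_snd)


definition cf :: "'b \<Rightarrow> 'b \<Rightarrow> 'b rfun" where "cf A B = (\<lambda>_. A, \<lambda>_. B)"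

lemma cf_Fbar:
  assumes i: "inf A B = (bot::'b::frame)" and u: "sup A B = top"
  shows "cf A B \<in> Fbar"
proof (rule FbarI)
  have ne1: "{s. r < s} \<noteq> {}" for r :: rat
  proof -
    have "r + 1 \<in> {s. r < s}" by simp
    then show ?thesis by blast
  qed
  have ne2: "{s. s < r} \<noteq> {}" for r :: rat
  proof -
    have "r - 1 \<in> {s. s < r}" by simp
    then show ?thesis by blast
  qed
  show "is_rhom (cf A B)" unfolding is_rhom_def cf_def using i ne1 ne2 by simp
  fix r s :: rat
  show "pcompl (fst (cf A B) r) \<le> snd (cf A B) s" unfolding cf_def using u by (simp add: pcompl_le_of_sup)
  show "pcompl (snd (cf A B) s) \<le> fst (cf A B) r" unfolding cf_def using u
    by (simp add: pcompl_le_of_sup sup_commute)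
qed

lemma minf_Fbar: "(minf::('b::frame) rfun) \<in> Fbar"
  using cf_Fbar[of "bot::'b" top] unfolding cf_def minf_def by simp

lemma pinf_Fbar: "(pinf::('b::frame) rfun) \<in> Fbar"
  using cf_Fbar[of "top::'b" bot] unfolding cf_def pinf_def by simp

lemma Fr_join: "f \<in> Fr \<Longrightarrow> g \<in> Fbar \<Longrightarrow> Fbar_join_is f g pinf \<Longrightarrow> g = pinf"
  by (simp add: Fr_def)

lemma R2_ED:
  assumes ed: "\<And>a::'b::frame. sup (pcompl a) (pcompl (pcompl a)) = top"
    and f: "(f::'b rfun) \<in> Fbar" and rs: "r < s"
  shows "sup (fst f r) (snd f s) = top"
proof -
  define t where "t = (r + s) / 2"
  have rt: "r < t" and ts: "t < s" unfolding t_def using mid1[OF rs] mid2[OF rs] by simp_all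
  define r' where "r' = (r + t) / 2"
  have rr: "r < r'" and rt': "r' < t" unfolding r'_def using mid1[OF rt] mid2[OF rt] by simp_all
  have "inf (fst f t) (snd f r') = bot" using rt' by (intro rhom_r1[OF Fbar_rhom[OF f]]) simp
  then have "snd f r' \<le> pcompl (fst f t)" by (simp add: le_pcompl_iff inf_commute)
  then have "pcompl (pcompl (fst f t)) \<le> pcompl (snd f r')" by (rule pcompl_anti)
  also have "\<dots> \<le> fst f r" by (rule Fbar_c2[OF f rr])
  finally have A: "pcompl (pcompl (fst f t)) \<le> fst f r" .
  have B: "pcompl (fst f t) \<le> snd f s" by (rule Fbar_c1[OF f ts])
  show ?thesis using sup_top_mono[OF ed B A] by (simp add: sup_commute)
qed

lemma Fr_Cont:
  assumes ed: "\<And>a::'b::frame. sup (pcompl a) (pcompl (pcompl a)) = top"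
    and P: "\<And>a::'b. is_cozero a \<Longrightarrow> \<exists>b. inf a b = bot \<and> sup a b = top"
    and f: "(f::'b rfun) \<in> Fr"
  shows "f \<in> Cont"
proof -
  have fF: "f \<in> Fbar" by (rule Fr_Fbar[OF f])
  have R: "is_rhom f" by (rule Fbar_rhom[OF fF])
  have R2: "\<And>r s. r < s \<Longrightarrow> sup (fst f r) (snd f s) = top" by (rule R2_ED[OF ed fF])
  define e where "e = (SUP x. fst f x)"
  obtain b where b: "inf e b = bot" "sup e b = top" using P[OF cozero_SUP[OF R R2]] unfolding e_def by blast
  have gF: "cf b e \<in> Fbar" using b by (intro cf_Fbar) (simp_all add: inf_commute sup_commute)
  have "Fbar_meet_is f (cf b e) minf"
    unfolding Fbar_meet_is_def
  proof (intro conjI ballI impI)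
    show "(minf::'b rfun) \<in> Fbar" by (rule minf_Fbar)
    show "rle minf f" "rle minf (cf b e)" by (simp_all add: rle_def minf_def)
    fix k assume k: "k \<in> Fbar" "rle k f \<and> rle k (cf b e)"
    have kb: "fst k r = bot" for r
    proof -
      have "fst k r \<le> fst f r" using k by (simp add: rle_def)
      also have "\<dots> \<le> e" unfolding e_def by (rule SUP_upper) simp
      finally have "fst k r \<le> inf e b" using k by (simp add: rle_def cf_def)
      then show ?thesis using b by (simp add: bot_unique)
    qed
    have "snd k s = top" for s
    proof -
      have "pcompl (fst k (s - 1)) \<le> snd k s" by (rule Fbar_c1[OF k(1)]) simp
      then show ?thesis by (simp add: kb pcompl_bot top_unique)
    qed
    then show "rle k minf" using kb by (simp add: rle_def minf_def)
  qed
  then have "cf b e = minf" by (rule Fr_meet[OF f gF])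
  then have "b = bot" unfolding cf_def minf_def by (metis fst_conv)
  then have r5: "(SUP x. fst f x) = top" using b unfolding e_def by simp
  define E where "E = (SUP x. snd f x)"
  have nR: "is_rhom (negf f)" by (rule negf_rhom[OF R])
  have nR2: "sup (fst (negf f) r) (snd (negf f) s) = top" if "r < s" for r s
    using R2[of "-s" "-r"] that by (simp add: sup_commute)
  have "E = (SUP x. fst (negf f) x)" unfolding E_def by (simp add: SUP_neg_UNIV)
  then obtain b' where b': "inf E b' = bot" "sup E b' = top" using P[OF cozero_SUP[OF nR nR2]] by auto
  have gF': "cf E b' \<in> Fbar" using b' by (intro cf_Fbar) simp_all
  have "Fbar_join_is f (cf E b') pinf"
    unfolding Fbar_join_is_def
  proof (intro conjI ballI impI)
    show "(pinf::'b rfun) \<in> Fbar" by (rule pinf_Fbar)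
    show "rle f pinf" "rle (cf E b') pinf" by (simp_all add: rle_def pinf_def)
    fix k assume k: "k \<in> Fbar" "rle f k \<and> rle (cf E b') k"
    have kb: "snd k s = bot" for s
    proof -
      have "snd k s \<le> snd f s" using k by (simp add: rle_def)
      also have "\<dots> \<le> E" unfolding E_def by (rule SUP_upper) simp
      finally have "snd k s \<le> inf E b'" using k by (simp add: rle_def cf_def)
      then show ?thesis using b' by (simp add: bot_unique)
    qed
    have "fst k r = top" for r
    proof -
      have "pcompl (snd k (r + 1)) \<le> fst k r" by (rule Fbar_c2[OF k(1)]) simp
      then show ?thesis by (simp add: kb pcompl_bot top_unique)
    qed
    then show "rle pinf k" using kb by (simp add: rle_def pinf_def)
  qed
  then have "cf E b' = pinf" by (rule Fr_join[OF f gF'])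
  then have "b' = bot" unfolding cf_def pinf_def by (metis snd_conv)
  then have r6: "(SUP x. snd f x) = top" using b' unfolding E_def by simp
  show ?thesis by (rule ContI[OF R R2 r5 r6])
qed

theorem proposition6p3:
  shows "(Fr :: ('a::frame coS) rfun set) = Cont \<longleftrightarrow>
    extremally_disconnected TYPE('a coS) \<and> P_frame TYPE('a coS)"
proof
  assume FC: "(Fr :: ('a::frame coS) rfun set) = Cont"
  have ed: "\<And>a::'a coS. sup (pcompl a) (pcompl (pcompl a)) = top" by (rule forward_ED[OF FC])
  show "extremally_disconnected TYPE('a coS) \<and> P_frame TYPE('a coS)"
    unfolding extremally_disconnected_def P_frame_def
  proof (intro conjI allI impI)
    fix a :: "'a coS" show "sup (pcompl a) (pcompl (pcompl a)) = top" by (rule ed)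
  next
    fix a :: "'a coS" assume "is_cozero a"
    then obtain f where f: "f \<in> Cont" "a = sup (snd f 0) (fst f 0)" unfolding is_cozero_def by blast
    show "\<exists>b. inf a b = bot \<and> sup a b = top"
      using forward_P[OF f(1) ed FC] f(2) by blast
  qed
next
  assume H: "extremally_disconnected TYPE('a coS) \<and> P_frame TYPE('a coS)"
  have ed: "\<And>a::'a coS. sup (pcompl a) (pcompl (pcompl a)) = top"
    using H unfolding extremally_disconnected_def by blast
  have P: "\<And>a::'a coS. is_cozero a \<Longrightarrow> \<exists>b. inf a b = bot \<and> sup a b = top"
    using H unfolding P_frame_def by blast
  show "(Fr :: ('a::frame coS) rfun set) = Cont"
  proof
    show "(Fr :: ('a::frame coS) rfun set) \<subseteq> Cont" using Fr_Cont[OF ed P] by blast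
    show "Cont \<subseteq> (Fr :: ('a::frame coS) rfun set)" using Cont_Fr by blast
  qed
qed

end
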